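(* Let $\alpha>0$, $\beta\in\mathbb{R}$ with $0\le|\beta|<\alpha$, $\mu\in\mathbb{R}$, $\delta>0$, and set $\gamma=\sqrt{\alpha^2-\beta^2}$. Let $F(x;\alpha,\beta,\mu,\delta)$ denote the cumulative distribution function of the normal inverse Gaussian distribution with these parameters. Then for every $x\in\mathbb{R}$ with $x-\mu>0$, \[ F(x;\alpha,\beta,\mu,\delta)=1-\frac{e^{\delta\gamma}}{\pi}\int_0^{\infty}\frac{t\,e^{-(x-\mu)\left(\sqrt{t^2+\alpha^2}-\beta\right)}}{\sqrt{t^2+\alpha^2}\left(\sqrt{t^2+\alpha^2}-\beta\right)}\sin(\delta t)\,dt . \]
   Context: The normal inverse Gaussian (NIG) distribution with parameters $\alpha>0$, $0\le|\beta|<\alpha$, $\mu\in\mathbb{R}$, $\delta>0$ has density $f(x;\alpha,\beta,\mu,\delta)=\frac{\alpha\delta}{\pi}\frac{K_1\left(\alpha\sqrt{\delta^2+(x-\mu)^2}\right)}{\sqrt{\delta^2+(x-\mu)^2}}e^{\delta\gamma+\beta(x-\mu)}$, $x\in\mathbb{R}$, where $\gamma=\sqrt{\alpha^2-\beta^2}$, and its cumulative distribution function is $F(x;\alpha,\beta,\mu,\delta)=\int_{-\infty}^x f(t;\alpha,\beta,\mu,\delta)\,dt$. Here $K_1$ denotes the modified Bessel function of the second kind of order $1$. *)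

theory Defs
  imports "HOL-Analysis.Analysis"
begin

text \<open>Modified Bessel function of the second kind of order 1, for real argument z > 0,
  via the standard integral representation
  K_nu(z) = int_0^infty exp(-z cosh s) cosh(nu s) ds (here nu = 1).\<close>
definition besselK1 :: "real \<Rightarrow> real" where
  "besselK1 z = (LINT s:{0..}|lborel. exp (- z * cosh s) * cosh s)"

definition nig_density :: "real \<Rightarrow> real \<Rightarrow> real \<Rightarrow> real \<Rightarrow> real \<Rightarrow> real" where
  "nig_density \<alpha> \<beta> \<mu> \<delta> x =
     (let \<gamma> = sqrt (\<alpha>\<^sup>2 - \<beta>\<^sup>2); r = sqrt (\<delta>\<^sup>2 + (x - \<mu>)\<^sup>2) in
      \<alpha> * \<delta> / pi * besselK1 (\<alpha> * r) / r * exp (\<delta> * \<gamma> + \<beta> * (x - \<mu>)))"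

definition nig_cdf :: "real \<Rightarrow> real \<Rightarrow> real \<Rightarrow> real \<Rightarrow> real \<Rightarrow> real" where
  "nig_cdf \<alpha> \<beta> \<mu> \<delta> x = (LINT t:{..x}|lborel. nig_density \<alpha> \<beta> \<mu> \<delta> t)"

end

theory Submission
  imports Defs "HOL-Probability.Probability" "HOL-Real_Asymp.Real_Asymp"
begin


lemma SUP_indicator_seq:
  fixes h :: ennreal
  assumes "\<exists>n. x \<in> A n"
  assumes "incseq A"
  shows "(SUP n. h * indicator (A n) x) = h"
proof (rule antisym)
  show "(SUP n. h * indicator (A n) x) \<le> h"
    by (rule SUP_least) (auto split: split_indicator)
  from assms obtain n where "x \<in> A n" by blast
  then have "h = h * indicator (A n) x" by simp
  also have "\<dots> \<le> (SUP n. h * indicator (A n) x)" by (rule SUP_upper) simp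
  finally show "h \<le> (SUP n. h * indicator (A n) x)" .
qed

lemma nn_subst_line:
  fixes f g g' :: "real \<Rightarrow> real"
  assumes f[measurable]: "f \<in> borel_measurable borel"
  and der: "\<And>x. (g has_real_derivative g' x) (at x)"
  and cont: "continuous_on UNIV g'"
  and nn: "\<And>x. g' x \<ge> 0"
  and top: "filterlim g at_top at_top" and bot: "filterlim g at_bot at_bot"
  shows "(\<integral>\<^sup>+x. ennreal (f x) \<partial>lborel) = (\<integral>\<^sup>+x. ennreal (f (g x) * g' x) \<partial>lborel)"
proof -
  have mono: "g a \<le> g b" if "a \<le> b" for a b
    by (rule deriv_nonneg_imp_mono[of a b g g']) (use der nn that in auto)
  have contg: "continuous_on UNIV g"
    using der by (metis DERIV_isCont continuous_at_imp_continuous_on)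
  have g_meas[measurable]: "g \<in> borel_measurable borel"
    using contg by (rule borel_measurable_continuous_onI)
  have g'_meas[measurable]: "g' \<in> borel_measurable borel"
    using cont by (rule borel_measurable_continuous_onI)
  define A where "A n = {g (- real n)..g (real n)}" for n :: nat
  define B where "B n = {- real n..real n}" for n :: nat
  have incA: "incseq A" unfolding A_def incseq_def
    by (auto intro: order_trans[OF mono] mono)
  have incB: "incseq B" unfolding B_def incseq_def by auto
  have exA: "\<exists>n. x \<in> A n" for x
  proof -
    from top have "eventually (\<lambda>y. g y \<ge> x) at_top" by (simp add: filterlim_at_top)
    then obtain N1 where N1: "\<And>y. y \<ge> N1 \<Longrightarrow> g y \<ge> x" by (auto simp: eventually_at_top_linorder)
    from bot have "eventually (\<lambda>y. g y \<le> x) at_bot" by (simp add: filterlim_at_bot)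
    then obtain N2 where N2: "\<And>y. y \<le> N2 \<Longrightarrow> g y \<le> x" by (auto simp: eventually_at_bot_linorder)
    obtain n :: nat where "real n \<ge> max N1 (- N2)" using real_arch_simple by blast
    then have "x \<in> A n" unfolding A_def using N1[of "real n"] N2[of "- real n"] by auto
    then show ?thesis ..
  qed
  have exB: "\<exists>n. x \<in> B n" for x
  proof -
    obtain n :: nat where "real n \<ge> \<bar>x\<bar>" using real_arch_simple by blast
    then have "x \<in> B n" unfolding B_def by auto
    then show ?thesis ..
  qed
  have sub: "(\<integral>\<^sup>+x. ennreal (f x * indicator (A n) x) \<partial>lborel) =
             (\<integral>\<^sup>+x. ennreal (f (g x) * g' x * indicator (B n) x) \<partial>lborel)" for n
    unfolding A_def B_def
    by (rule nn_integral_substitution) (simp add: set_borel_measurable_def, measurable, (use der cont nn in \<open>auto intro: continuous_on_subset\<close>)+)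
  have eqA: "ennreal (f x * indicator (A n) x) = ennreal (f x) * indicator (A n) x" for x n
    by (auto split: split_indicator)
  have eqB: "ennreal (f (g x) * g' x * indicator (B n) x) = ennreal (f (g x) * g' x) * indicator (B n) x" for x n
    by (auto split: split_indicator)
  have "(\<integral>\<^sup>+x. ennreal (f x) \<partial>lborel) = (\<integral>\<^sup>+x. (SUP n. ennreal (f x) * indicator (A n) x) \<partial>lborel)"
    using SUP_indicator_seq[OF exA incA] by simp
  also have "\<dots> = (SUP n. \<integral>\<^sup>+x. ennreal (f x) * indicator (A n) x \<partial>lborel)"
  proof (rule nn_integral_monotone_convergence_SUP)
    show "incseq (\<lambda>n x. ennreal (f x) * indicator (A n) x)"
      using incA unfolding incseq_def le_fun_def
      by (auto split: split_indicator simp: subset_eq)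
    show "(\<lambda>x. ennreal (f x) * indicator (A i) x) \<in> borel_measurable lborel" for i
      unfolding A_def by measurable
  qed
  also have "\<dots> = (SUP n. \<integral>\<^sup>+x. ennreal (f (g x) * g' x) * indicator (B n) x \<partial>lborel)"
    using sub by (simp add: eqA eqB)
  also have "\<dots> = (\<integral>\<^sup>+x. (SUP n. ennreal (f (g x) * g' x) * indicator (B n) x) \<partial>lborel)"
  proof (rule nn_integral_monotone_convergence_SUP[symmetric])
    show "incseq (\<lambda>n x. ennreal (f (g x) * g' x) * indicator (B n) x)"
      using incB unfolding incseq_def le_fun_def
      by (auto split: split_indicator simp: subset_eq)
    show "(\<lambda>x. ennreal (f (g x) * g' x) * indicator (B i) x) \<in> borel_measurable lborel" for i
      unfolding B_def by measurable
  qed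
  also have "\<dots> = (\<integral>\<^sup>+x. ennreal (f (g x) * g' x) \<partial>lborel)"
    using SUP_indicator_seq[OF exB incB] by simp
  finally show ?thesis .
qed



definition EE :: "real \<Rightarrow> real \<Rightarrow> real \<Rightarrow> real" where
  "EE a b v = exp (- (a * exp (- v) + b * exp v))"

lemma EE_pos[simp]: "EE a b v > 0" by (simp add: EE_def)
lemma EE_nonneg[simp]: "EE a b v \<ge> 0" by (simp add: EE_def)
lemma EE_meas[measurable]: "(\<lambda>v. EE a b v) \<in> borel_measurable borel"
  unfolding EE_def by measurable

lemma nn_gauss: "(\<integral>\<^sup>+x. ennreal (exp (- x\<^sup>2)) \<partial>lborel) = ennreal (sqrt pi)"
proof -
  let ?s = "sqrt (1/2) :: real"
  have nd: "normal_density 0 ?s x = exp (- x\<^sup>2) / sqrt pi" for x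
    by (simp add: normal_density_def real_sqrt_mult)
  have "(\<integral>\<^sup>+x. ennreal (normal_density 0 ?s x) \<partial>lborel) = ennreal 1"
    by (subst nn_integral_eq_integral) auto
  then have "(\<integral>\<^sup>+x. ennreal (exp (- x\<^sup>2) / sqrt pi) \<partial>lborel) = 1" by (simp add: nd)
  then have "ennreal (sqrt pi) * (\<integral>\<^sup>+x. ennreal (exp (- x\<^sup>2) / sqrt pi) \<partial>lborel) = ennreal (sqrt pi)"
    by simp
  moreover have "ennreal (sqrt pi) * (\<integral>\<^sup>+x. ennreal (exp (- x\<^sup>2) / sqrt pi) \<partial>lborel) =
      (\<integral>\<^sup>+x. ennreal (exp (- x\<^sup>2)) \<partial>lborel)"
    by (subst nn_integral_cmult[symmetric]) (auto simp: ennreal_mult[symmetric])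
  ultimately show ?thesis by simp
qed

lemma J1_J2_refl:
  assumes a: "a > 0" and b: "b > 0"
  shows "(\<integral>\<^sup>+v. ennreal (exp (v/2) * EE a b v) \<partial>lborel) =
         ennreal (sqrt (a/b)) * (\<integral>\<^sup>+v. ennreal (exp (-v/2) * EE a b v) \<partial>lborel)"
proof -
  define t where "t = ln (a/b)"
  have et: "exp t = a / b" using a b by (simp add: t_def)
  have et2: "exp (t/2) = sqrt (a/b)"
    using a b by (simp add: t_def powr_def[symmetric] powr_half_sqrt[symmetric] powr_def)
  have eq: "exp ((t - x)/2) * EE a b (t - x) = sqrt (a/b) * (exp (-x/2) * EE a b x)" for x
  proof -
    have "exp ((t - x)/2) = exp (t/2) * exp (-x/2)" by (simp add: exp_add[symmetric] diff_divide_distrib)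
    moreover have "a * exp (- (t - x)) + b * exp (t - x) = a * exp (-x) + b * exp x"
      using a b by (simp add: exp_diff et exp_minus field_simps)
    ultimately show ?thesis by (simp add: EE_def et2)
  qed
  have "(\<integral>\<^sup>+v. ennreal (exp (v/2) * EE a b v) \<partial>lborel) =
        ennreal \<bar>-1\<bar> * (\<integral>\<^sup>+x. ennreal (exp ((t + (-1) * x)/2) * EE a b (t + (-1) * x)) \<partial>lborel)"
    by (rule nn_integral_real_affine) auto
  also have "\<dots> = (\<integral>\<^sup>+x. ennreal (sqrt (a/b)) * ennreal (exp (-x/2) * EE a b x) \<partial>lborel)"
    using eq a b by (simp add: ennreal_mult)
  also have "\<dots> = ennreal (sqrt (a/b)) * (\<integral>\<^sup>+v. ennreal (exp (-v/2) * EE a b v) \<partial>lborel)"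
    by (rule nn_integral_cmult) measurable
  finally show ?thesis .
qed



lemma ennreal_lin2:
  fixes c p q A B :: real
  assumes "c \<ge> 0" "p \<ge> 0" "q \<ge> 0" "A \<ge> 0" "B \<ge> 0"
  shows "ennreal (c*(p*A+q*B)) = ennreal c * (ennreal p * ennreal A + ennreal q * ennreal B)"
proof -
  have "ennreal (c*(p*A+q*B)) = ennreal c * ennreal (p*A+q*B)" by (rule ennreal_mult) (use assms in auto)
  also have "ennreal (p*A+q*B) = ennreal (p*A) + ennreal (q*B)" by (rule ennreal_plus) (use assms in auto)
  also have "ennreal (p*A) = ennreal p * ennreal A" by (rule ennreal_mult) (use assms in auto)
  also have "ennreal (q*B) = ennreal q * ennreal B" by (rule ennreal_mult) (use assms in auto)
  finally show ?thesis .
qed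

lemma J_sum:
  assumes a: "a > 0" and b: "b > 0"
  shows "ennreal (sqrt pi) = ennreal (exp (2 * sqrt (a*b)) / 2) *
     (ennreal (sqrt b) * (\<integral>\<^sup>+v. ennreal (exp (v/2) * EE a b v) \<partial>lborel) +
      ennreal (sqrt a) * (\<integral>\<^sup>+v. ennreal (exp (-v/2) * EE a b v) \<partial>lborel))"
proof -
  define q where "q v = sqrt b * exp (v/2) - sqrt a * exp (-v/2)" for v
  define q' where "q' v = (sqrt b * exp (v/2) + sqrt a * exp (-v/2)) / 2" for v
  have der: "(q has_real_derivative q' v) (at v)" for v
    unfolding q_def q'_def by (auto intro!: derivative_eq_intros simp: field_simps)
  have cont: "continuous_on UNIV q'" unfolding q'_def by (intro continuous_intros) auto
  have nn: "q' v \<ge> 0" for v unfolding q'_def using a b by (intro divide_nonneg_nonneg add_nonneg_nonneg mult_nonneg_nonneg) auto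
  have top: "filterlim q at_top at_top" unfolding q_def using a b by real_asymp
  have bot: "filterlim q at_bot at_bot" unfolding q_def using a b by real_asymp
  have sq: "(q v)\<^sup>2 = b * exp v + a * exp (-v) - 2 * sqrt (a*b)" for v
  proof -
    have e1: "exp (v/2) * exp (v/2) = exp v" by (simp add: exp_add[symmetric])
    have e2: "exp (-(v/2)) * exp (-(v/2)) = exp (-v)" by (simp add: exp_add[symmetric])
    have e3: "exp (v/2) * exp (-(v/2)) = 1" by (simp add: exp_add[symmetric])
    have "(q v)\<^sup>2 = b * (exp (v/2) * exp (v/2)) + a * (exp (-v/2) * exp (-v/2))
          - 2 * sqrt (a * b) * (exp (v/2) * exp (-v/2))"
    proof -
      have sa: "sqrt a * (sqrt a * z) = a * z" for z using a by (simp add: mult.assoc[symmetric])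
      have sb: "sqrt b * (sqrt b * z) = b * z" for z using b by (simp add: mult.assoc[symmetric])
      show ?thesis unfolding q_def using a b by (simp add: power2_eq_square algebra_simps real_sqrt_mult sa sb)
    qed
    also have "\<dots> = b * exp v + a * exp (-v) - 2 * sqrt (a*b)"
      using a b by (simp add: e1 e2 e3 real_sqrt_mult)
    finally show ?thesis .
  qed
  have eqq: "exp (- (q v)\<^sup>2) * q' v =
      exp (2 * sqrt (a*b)) / 2 * (sqrt b * (exp (v/2) * EE a b v) + sqrt a * (exp (-v/2) * EE a b v))" for v
  proof -
    have "exp (- (q v)\<^sup>2) = exp (2 * sqrt (a*b)) * EE a b v"
      unfolding sq EE_def by (simp add: exp_add[symmetric] algebra_simps)
    then show ?thesis unfolding q'_def by (simp add: algebra_simps)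
  qed
  have "ennreal (sqrt pi) = (\<integral>\<^sup>+x. ennreal (exp (- x\<^sup>2)) \<partial>lborel)" by (rule nn_gauss[symmetric])
  also have "\<dots> = (\<integral>\<^sup>+x. ennreal (exp (- (q x)\<^sup>2) * q' x) \<partial>lborel)"
    by (rule nn_subst_line[OF _ der cont nn top bot]) measurable
  also have "\<dots> = (\<integral>\<^sup>+v. ennreal (exp (2 * sqrt (a*b)) / 2) *
       (ennreal (sqrt b) * ennreal (exp (v/2) * EE a b v) + ennreal (sqrt a) * ennreal (exp (-v/2) * EE a b v)) \<partial>lborel)"
    by (intro nn_integral_cong, subst eqq, rule ennreal_lin2) (use a b in auto)
  also have "\<dots> = ennreal (exp (2 * sqrt (a*b)) / 2) *
     (ennreal (sqrt b) * (\<integral>\<^sup>+v. ennreal (exp (v/2) * EE a b v) \<partial>lborel) +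
      ennreal (sqrt a) * (\<integral>\<^sup>+v. ennreal (exp (-v/2) * EE a b v) \<partial>lborel))"
    by (simp add: nn_integral_cmult nn_integral_add)
  finally show ?thesis .
qed

lemma J2:
  assumes a: "a > 0" and b: "b > 0"
  shows "(\<integral>\<^sup>+v. ennreal (exp (-v/2) * EE a b v) \<partial>lborel) = ennreal (sqrt (pi/a) * exp (- 2 * sqrt (a*b)))"
proof -
  define X where "X = (\<integral>\<^sup>+v. ennreal (exp (-v/2) * EE a b v) \<partial>lborel)"
  define c where "c = exp (2 * sqrt (a*b)) * sqrt a"
  have c: "c > 0" unfolding c_def using a by simp
  have "ennreal (sqrt pi) = ennreal (exp (2 * sqrt (a*b)) / 2) *
     (ennreal (sqrt b) * (ennreal (sqrt (a/b)) * X) + ennreal (sqrt a) * X)"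
    using J_sum[OF a b] J1_J2_refl[OF a b] unfolding X_def by simp
  also have "ennreal (sqrt b) * (ennreal (sqrt (a/b)) * X) = ennreal (sqrt a) * X"
    using a b by (simp add: ennreal_mult[symmetric] mult.assoc[symmetric] real_sqrt_mult[symmetric])
  also have "ennreal (exp (2 * sqrt (a*b)) / 2) * (ennreal (sqrt a) * X + ennreal (sqrt a) * X) = ennreal c * X"
  proof -
    have h: "ennreal (exp (2 * sqrt (a*b)) / 2) * 2 = ennreal (exp (2 * sqrt (a*b)))"
      by (subst ennreal_numeral[symmetric], subst ennreal_mult[symmetric]) auto
    have "ennreal (exp (2 * sqrt (a*b)) / 2) * (ennreal (sqrt a) * X + ennreal (sqrt a) * X) =
        (ennreal (exp (2 * sqrt (a*b)) / 2) * 2) * ennreal (sqrt a) * X"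
      by (simp add: mult_2[symmetric] mult.assoc)
    also have "\<dots> = ennreal c * X" unfolding h c_def using a by (subst ennreal_mult) auto
    finally show ?thesis .
  qed
  finally have e: "ennreal (sqrt pi) = ennreal c * X" .
  have "X = ennreal (1/c) * (ennreal c * X)"
    using c by (simp add: mult.assoc[symmetric] ennreal_mult[symmetric])
  also have "\<dots> = ennreal (sqrt pi / c)" using c by (simp add: e[symmetric] ennreal_mult[symmetric])
  also have "sqrt pi / c = sqrt (pi/a) * exp (- 2 * sqrt (a*b))"
    unfolding c_def using a by (simp add: real_sqrt_divide exp_minus field_simps)
  finally show ?thesis unfolding X_def .
qed

lemma J1:
  assumes a: "a > 0" and b: "b > 0"
  shows "(\<integral>\<^sup>+v. ennreal (exp (v/2) * EE a b v) \<partial>lborel) = ennreal (sqrt (pi/b) * exp (- 2 * sqrt (a*b)))"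
proof -
  have "(\<integral>\<^sup>+v. ennreal (exp (v/2) * EE a b v) \<partial>lborel) = ennreal (sqrt (a/b)) * ennreal (sqrt (pi/a) * exp (- 2 * sqrt (a*b)))"
    using J1_J2_refl[OF a b] J2[OF a b] by simp
  also have "\<dots> = ennreal (sqrt (pi/b) * exp (- 2 * sqrt (a*b)))"
    using a b by (simp add: ennreal_mult[symmetric] real_sqrt_divide field_simps)
  finally show ?thesis .
qed



lemma cosh_meas[measurable]: "(cosh :: real \<Rightarrow> real) \<in> borel_measurable borel"
  by (intro borel_measurable_continuous_onI continuous_intros)

lemma nn_fold:
  fixes g :: "real \<Rightarrow> real"
  assumes [measurable]: "g \<in> borel_measurable borel" and ev: "\<And>x. g (-x) = g x"
  shows "(\<integral>\<^sup>+x. ennreal (g x) \<partial>lborel) = 2 * (\<integral>\<^sup>+x. ennreal (g x) * indicator {0..} x \<partial>lborel)"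
proof -
  have "(\<integral>\<^sup>+x. ennreal (g x) \<partial>lborel) =
     (\<integral>\<^sup>+x. ennreal (g x) * indicator {0..} x + ennreal (g x) * indicator {..<0} x \<partial>lborel)"
    by (intro nn_integral_cong) (auto split: split_indicator)
  also have "\<dots> = (\<integral>\<^sup>+x. ennreal (g x) * indicator {0..} x \<partial>lborel) + (\<integral>\<^sup>+x. ennreal (g x) * indicator {..<0} x \<partial>lborel)"
    by (rule nn_integral_add) auto
  also have "(\<integral>\<^sup>+x. ennreal (g x) * indicator {..<0} x \<partial>lborel) =
      ennreal \<bar>-1\<bar> * (\<integral>\<^sup>+x. ennreal (g (0 + (-1) * x)) * indicator {..<0} (0 + (-1) * x) \<partial>lborel)"
    by (rule nn_integral_real_affine) auto
  also have "\<dots> = (\<integral>\<^sup>+x. ennreal (g x) * indicator {0..} x \<partial>lborel)"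
    using AE_lborel_singleton[of 0]
    by (simp, intro nn_integral_cong_AE) (auto simp: ev split: split_indicator elim!: eventually_mono)
  finally show ?thesis by (simp add: mult_2)
qed

lemma bound_y_exp:
  fixes a y :: real assumes a: "a > 0" and y: "y \<ge> 0"
  shows "y \<le> (1/a + 1) * exp (a/2 * y\<^sup>2)"
proof -
  have "a * y \<le> 1 + a\<^sup>2 * y\<^sup>2 / 4"
    using sum_squares_ge_zero[of "a*y/2 - 1" 0] by (simp add: power2_eq_square algebra_simps)
  then have 1: "y \<le> 1/a + a * y\<^sup>2/4" using a by (simp add: field_simps power2_eq_square)
  have 2: "1/a + a * y\<^sup>2/4 \<le> (1/a + 1) * (1 + a/2 * y\<^sup>2)"
    using a by (simp add: algebra_simps field_simps power2_eq_square)
  have 3: "(1/a + 1) * (1 + a/2 * y\<^sup>2) \<le> (1/a + 1) * exp (a/2 * y\<^sup>2)"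
    using a by (intro mult_left_mono exp_ge_add_one_self) auto
  show ?thesis using 1 2 3 by linarith
qed

lemma K1_finite:
  assumes a: "a > 0" and b: "b > 0"
  shows "(\<integral>\<^sup>+v. ennreal (exp (-v) * EE a b v) \<partial>lborel) < \<infinity>"
proof -
  have le: "exp (-v) * EE a b v \<le> (1/a + 1) * (exp (-v/2) * EE (a/2) b v)" for v
  proof -
    have y: "exp (-v/2) \<le> (1/a + 1) * exp (a/2 * (exp (-v/2))\<^sup>2)"
      by (rule bound_y_exp) (use a in auto)
    have sq: "(exp (-v/2))\<^sup>2 = exp (-v)" by (simp add: power2_eq_square exp_add[symmetric])
    have ee: "EE a b v = exp (- (a/2 * exp (-v))) * EE (a/2) b v"
      by (simp add: EE_def exp_add[symmetric] algebra_simps)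
    have "exp (-v) * EE a b v = exp (-v/2) * exp (-v/2) * EE a b v"
      by (simp add: exp_add[symmetric])
    also have "\<dots> = exp (-v/2) * (exp (-v/2) * exp (- (a/2 * exp (-v)))) * EE (a/2) b v"
      by (simp add: ee)
    also have "\<dots> \<le> exp (-v/2) * ((1/a + 1) * exp (a/2 * exp (-v)) * exp (- (a/2 * exp (-v)))) * EE (a/2) b v"
      using y unfolding sq by (intro mult_right_mono mult_left_mono) auto
    also have "\<dots> = (1/a + 1) * (exp (-v/2) * EE (a/2) b v)"
      by (simp add: exp_minus field_simps)
    finally show ?thesis .
  qed
  have "(\<integral>\<^sup>+v. ennreal (exp (-v) * EE a b v) \<partial>lborel) \<le>
        (\<integral>\<^sup>+v. ennreal ((1/a + 1) * (exp (-v/2) * EE (a/2) b v)) \<partial>lborel)"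
    using le by (intro nn_integral_mono ennreal_leI)
  also have "\<dots> = (\<integral>\<^sup>+v. ennreal (1/a + 1) * ennreal (exp (-v/2) * EE (a/2) b v) \<partial>lborel)"
    by (intro nn_integral_cong ennreal_mult) (use a in auto)
  also have "\<dots> = ennreal (1/a + 1) * (\<integral>\<^sup>+v. ennreal (exp (-v/2) * EE (a/2) b v) \<partial>lborel)"
    by (rule nn_integral_cmult) measurable
  also have "\<dots> < \<infinity>" using a b J2[of "a/2" b] by (simp add: ennreal_mult_less_top)
  finally show ?thesis .
qed

lemma K1_link:
  assumes a: "a > 0" and b: "b > 0"
  shows "set_integrable lborel {0..} (\<lambda>s. exp (- (2 * sqrt (a*b)) * cosh s) * cosh s)"
    and "(\<integral>\<^sup>+v. ennreal (exp (-v) * EE a b v) \<partial>lborel) = ennreal (2 * sqrt (b/a) * besselK1 (2 * sqrt (a*b)))"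
proof -
  define z where "z = 2 * sqrt (a*b)"
  define c where "c = sqrt (a/b)"
  define t where "t = ln c"
  have c: "c > 0" using a b by (simp add: c_def)
  have et: "exp t = c" using c by (simp add: t_def)
  define k where "k x = exp (- z * cosh x) * cosh x" for x
  have k_meas[measurable]: "k \<in> borel_measurable borel" unfolding k_def by measurable
  have tr: "exp (- (t + x)) * EE a b (t + x) = (1/c) * (exp (-x) * exp (- z * cosh x))" for x
  proof -
    have e1: "exp (- (t + x)) = exp (-x) / c"
      using c unfolding et[symmetric] by (simp add: exp_add[symmetric] field_simps)
    have e1': "exp (- t - x) = exp (-x) / c" using e1 by simp
    have ac: "a / c = sqrt (a*b)" unfolding c_def using a b
      by (simp add: real_sqrt_divide real_sqrt_mult field_simps)
    have bc: "b * c = sqrt (a*b)" unfolding c_def using a b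
      by (simp add: real_sqrt_divide real_sqrt_mult field_simps)
    have "a * exp (- (t + x)) + b * exp (t + x) = (a/c) * exp (-x) + (b*c) * exp x"
    proof -
      have e2: "exp (t + x) = c * exp x" unfolding et[symmetric] by (simp add: exp_add)
      show ?thesis unfolding e1 e2 by (simp add: field_simps)
    qed
    also have "\<dots> = z * cosh x" unfolding ac bc z_def cosh_field_def by (simp add: exp_minus field_simps)
    finally show ?thesis by (simp add: EE_def e1 e1')
  qed
  have "(\<integral>\<^sup>+v. ennreal (exp (-v) * EE a b v) \<partial>lborel) =
      ennreal \<bar>1\<bar> * (\<integral>\<^sup>+x. ennreal (exp (- (t + 1 * x)) * EE a b (t + 1 * x)) \<partial>lborel)"
    by (rule nn_integral_real_affine) auto
  also have "\<dots> = (\<integral>\<^sup>+x. ennreal (1/c) * ennreal (exp (-x) * exp (- z * cosh x)) \<partial>lborel)"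
    apply (simp only: abs_one ennreal_1 mult_1_left)
    apply (intro nn_integral_cong)
    apply (simp only: mult_1_left tr)
    apply (rule ennreal_mult)
    using c by auto
  also have "\<dots> = ennreal (1/c) * (\<integral>\<^sup>+x. ennreal (exp (-x) * exp (- z * cosh x)) \<partial>lborel)"
    by (rule nn_integral_cmult) measurable
  also have "(\<integral>\<^sup>+x. ennreal (exp (-x) * exp (- z * cosh x)) \<partial>lborel) = (\<integral>\<^sup>+x. ennreal (k x) \<partial>lborel)"
  proof -
    have h: "(\<integral>\<^sup>+x. ennreal (exp (-x) * exp (- z * cosh x)) \<partial>lborel) =
      (\<integral>\<^sup>+x. ennreal (exp (x) * exp (- z * cosh x)) \<partial>lborel)"
      using nn_integral_real_affine[of "\<lambda>x. ennreal (exp (-x) * exp (- z * cosh x))" "-1" 0] by simp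
    have "2 * (\<integral>\<^sup>+x. ennreal (exp (-x) * exp (- z * cosh x)) \<partial>lborel) =
       (\<integral>\<^sup>+x. ennreal (exp (-x) * exp (- z * cosh x)) \<partial>lborel) + (\<integral>\<^sup>+x. ennreal (exp (x) * exp (- z * cosh x)) \<partial>lborel)"
      using h by (simp add: mult_2)
    also have "\<dots> = (\<integral>\<^sup>+x. ennreal (exp (-x) * exp (- z * cosh x)) + ennreal (exp (x) * exp (- z * cosh x)) \<partial>lborel)"
      by (rule nn_integral_add[symmetric]) auto
    also have "\<dots> = (\<integral>\<^sup>+x. ennreal (2 * k x) \<partial>lborel)"
      by (intro nn_integral_cong) (simp add: k_def cosh_field_def ennreal_plus[symmetric] field_simps del: ennreal_plus)
    also have "\<dots> = 2 * (\<integral>\<^sup>+x. ennreal (k x) \<partial>lborel)"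
      by (subst nn_integral_cmult[symmetric]) (auto simp: ennreal_mult k_def)
    finally show ?thesis by (simp add: ennreal_mult_cancel_left)
  qed
  also have "(\<integral>\<^sup>+x. ennreal (k x) \<partial>lborel) = 2 * (\<integral>\<^sup>+x. ennreal (k x) * indicator {0..} x \<partial>lborel)"
    by (rule nn_fold) (auto simp: k_def)
  finally have main: "(\<integral>\<^sup>+v. ennreal (exp (-v) * EE a b v) \<partial>lborel) =
     ennreal (1/c) * (2 * (\<integral>\<^sup>+x. ennreal (k x) * indicator {0..} x \<partial>lborel))" .
  have fin: "(\<integral>\<^sup>+x. ennreal (k x) * indicator {0..} x \<partial>lborel) < \<infinity>"
  proof -
    have "ennreal (1/c) * (2 * (\<integral>\<^sup>+x. ennreal (k x) * indicator {0..} x \<partial>lborel)) < \<infinity>"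
      using main K1_finite[OF a b] by simp
    then show ?thesis using c by (auto simp: ennreal_mult_less_top top_unique)
  qed
  have knn: "k x \<ge> 0" for x unfolding k_def by simp
  show si: "set_integrable lborel {0..} (\<lambda>s. exp (- (2 * sqrt (a*b)) * cosh s) * cosh s)"
    unfolding set_integrable_def z_def[symmetric] k_def[symmetric]
  proof (rule integrableI_nonneg)
    show "AE x in lborel. 0 \<le> indicat_real {0..} x *\<^sub>R k x" using knn by simp
    show "(\<integral>\<^sup>+x. ennreal (indicat_real {0..} x *\<^sub>R k x) \<partial>lborel) < \<infinity>"
    proof -
      have "(\<integral>\<^sup>+x. ennreal (indicat_real {0..} x *\<^sub>R k x) \<partial>lborel) = (\<integral>\<^sup>+x. ennreal (k x) * indicator {0..} x \<partial>lborel)"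
        by (intro nn_integral_cong) (auto split: split_indicator)
      then show ?thesis using fin by simp
    qed
  qed measurable
  have "(\<integral>\<^sup>+x. ennreal (k x) * indicator {0..} x \<partial>lborel) = ennreal (besselK1 z)"
  proof -
    have "(\<integral>\<^sup>+x. ennreal (k x) * indicator {0..} x \<partial>lborel) = (\<integral>\<^sup>+x. ennreal (indicat_real {0..} x *\<^sub>R k x) \<partial>lborel)"
      by (intro nn_integral_cong) (auto split: split_indicator)
    also have "\<dots> = ennreal (LINT x|lborel. indicat_real {0..} x *\<^sub>R k x)"
      using si knn unfolding set_integrable_def z_def[symmetric] k_def[symmetric]
      by (intro nn_integral_eq_integral) auto
    also have "(LINT x|lborel. indicat_real {0..} x *\<^sub>R k x) = besselK1 z"
      unfolding besselK1_def set_lebesgue_integral_def k_def ..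
    finally show ?thesis .
  qed
  then show "(\<integral>\<^sup>+v. ennreal (exp (-v) * EE a b v) \<partial>lborel) = ennreal (2 * sqrt (b/a) * besselK1 (2 * sqrt (a*b)))"
  proof -
    assume h: "(\<integral>\<^sup>+x. ennreal (k x) * indicator {0..} x \<partial>lborel) = ennreal (besselK1 z)"
    have K1nn: "besselK1 z \<ge> 0" unfolding besselK1_def set_lebesgue_integral_def
      by (intro Bochner_Integration.integral_nonneg) (auto simp: knn[unfolded k_def])
    have "ennreal (1/c * (2 * besselK1 z)) = ennreal (1/c) * (2 * ennreal (besselK1 z))"
      apply (subst ennreal_mult)
        apply (use c K1nn in simp)
       apply (use c K1nn in simp)
      apply (subst ennreal_mult)
        apply (use c K1nn in simp)
       apply (use c K1nn in simp)
      by simp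
    then have "ennreal (1/c) * (2 * ennreal (besselK1 z)) = ennreal (1/c * (2 * besselK1 z))" by simp
    also have "1/c * (2 * besselK1 z) = 2 * sqrt (b/a) * besselK1 z"
      unfolding c_def using a b by (simp add: real_sqrt_divide)
    finally show ?thesis unfolding main h z_def[symmetric] .
  qed
qed



lemma gauss_cos: "(LINT x|lborel. cos (\<tau> * x) * exp (- x\<^sup>2 / 2)) = sqrt (2*pi) * exp (- \<tau>\<^sup>2 / 2)"
proof -
  interpret real_distribution std_normal_distribution by (rule real_dist_normal_dist)
  have i: "integrable std_normal_distribution (\<lambda>x. iexp (\<tau> * x))"
    by (rule integrable_iexp) auto
  have "complex_of_real (exp (- \<tau>\<^sup>2 / 2)) = char std_normal_distribution \<tau>"
    by (simp add: char_std_normal_distribution)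
  also have "\<dots> = (LINT x|lborel. std_normal_density x *\<^sub>R iexp (\<tau> * x))"
    unfolding char_def by (rule integral_density) auto
  finally have "exp (- \<tau>\<^sup>2 / 2) = Re (LINT x|lborel. std_normal_density x *\<^sub>R iexp (\<tau> * x))"
    by (metis Re_complex_of_real)
  also have "\<dots> = (LINT x|lborel. Re (std_normal_density x *\<^sub>R iexp (\<tau> * x)))"
    using i by (subst integral_Re) (auto simp: integrable_density)
  also have "\<dots> = (LINT x|lborel. cos (\<tau> * x) * exp (- x\<^sup>2 / 2) / sqrt (2*pi))"
    by (intro Bochner_Integration.integral_cong refl) (simp add: std_normal_density_def Re_exp cos_of_real)
  finally show ?thesis by simp
qed

lemma nd_scaled:
  fixes w t :: real
  assumes w: "w > 0"
  shows "exp (- w * t\<^sup>2 / 2) = sqrt (2*pi) / sqrt w * normal_density 0 (1 / sqrt w) t"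
  using w by (simp add: normal_density_def real_sqrt_mult real_sqrt_divide power_divide field_simps)

lemma gauss_int:
  fixes w :: real
  assumes w: "w > 0"
  shows "integrable lborel (\<lambda>t. exp (- w * t\<^sup>2 / 2))"
  unfolding nd_scaled[OF w] by (intro integrable_mult_right integrable_normal_density) (use w in auto)

lemma gauss_abs_int:
  fixes w :: real
  assumes w: "w > 0"
  shows "integrable lborel (\<lambda>t. \<bar>t\<bar> * exp (- w * t\<^sup>2 / 2))"
proof -
  have "integrable lborel (\<lambda>t. sqrt (2*pi) / sqrt w * (normal_density 0 (1 / sqrt w) t * \<bar>t - 0\<bar> ^ 1))"
    by (intro integrable_mult_right integrable_normal_moment_abs) (use w in auto)
  then show ?thesis unfolding nd_scaled[OF w] by (simp add: mult_ac)
qed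

lemma gauss_cos_scaled:
  fixes w \<delta> :: real
  assumes w: "w > 0"
  shows "(LINT t|lborel. cos (\<delta> * t) * exp (- w * t\<^sup>2 / 2)) = sqrt (2*pi) * exp (- \<delta>\<^sup>2 / (2*w)) / sqrt w"
proof -
  have "sqrt (2*pi) * exp (- (\<delta> / sqrt w)\<^sup>2 / 2) = (LINT x|lborel. cos (\<delta> / sqrt w * x) * exp (- x\<^sup>2 / 2))"
    by (rule gauss_cos[symmetric])
  also have "\<dots> = \<bar>sqrt w\<bar> *\<^sub>R (LINT x|lborel. cos (\<delta> / sqrt w * (0 + sqrt w * x)) * exp (- (0 + sqrt w * x)\<^sup>2 / 2))"
    by (rule lborel_integral_real_affine) (use w in auto)
  also have "\<dots> = sqrt w * (LINT t|lborel. cos (\<delta> * t) * exp (- w * t\<^sup>2 / 2))"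
    using w by (simp add: power_mult_distrib)
  finally show ?thesis using w by (simp add: power_divide field_simps)
qed

lemma gauss_sin:
  fixes w \<delta> :: real
  assumes w: "w > 0"
  shows "integrable lborel (\<lambda>t. t * sin (\<delta> * t) * exp (- w * t\<^sup>2 / 2))"
    and "(LINT t|lborel. t * sin (\<delta> * t) * exp (- w * t\<^sup>2 / 2)) = \<delta> * sqrt (2*pi) * exp (- \<delta>\<^sup>2 / (2*w)) / (w * sqrt w)"
proof -
  show i1: "integrable lborel (\<lambda>t. t * sin (\<delta> * t) * exp (- w * t\<^sup>2 / 2))"
    by (rule Bochner_Integration.integrable_bound[OF gauss_abs_int[OF w]])
       (auto simp: abs_mult intro!: mult_right_mono[OF mult_left_le] always_eventually)
  have i2: "integrable lborel (\<lambda>t. cos (\<delta> * t) * exp (- w * t\<^sup>2 / 2))"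
    by (rule Bochner_Integration.integrable_bound[OF gauss_int[OF w]])
       (auto simp: abs_mult intro!: mult_right_mono always_eventually)
  define F where "F t = - (1/w) * exp (- w * t\<^sup>2 / 2) * sin (\<delta> * t)" for t
  define g where "g t = t * sin (\<delta> * t) * exp (- w * t\<^sup>2 / 2) - \<delta> / w * (cos (\<delta> * t) * exp (- w * t\<^sup>2 / 2))" for t
  have ig: "integrable lborel g" unfolding g_def using i1 i2 by auto
  have der: "(F has_real_derivative g t) (at t)" for t
    unfolding F_def g_def using w
    by (auto intro!: derivative_eq_intros simp: field_simps power2_eq_square)
  have Fb: "\<bar>F t\<bar> \<le> (1/w) * exp (- w * t\<^sup>2 / 2)" for t
  proof -
    have "\<bar>sin (\<delta> * t)\<bar> \<le> 1" by (rule abs_sin_le_one)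
    then have "exp (- w * t\<^sup>2 / 2) * \<bar>sin (\<delta> * t)\<bar> \<le> exp (- w * t\<^sup>2 / 2)"
      by (intro mult_left_le) auto
    then show ?thesis unfolding F_def using w by (simp add: abs_mult divide_right_mono)
  qed
  have lt: "(F \<longlongrightarrow> 0) at_top"
  proof (rule Lim_null_comparison)
    show "\<forall>\<^sub>F x in at_top. norm (F x) \<le> (1/w) * exp (- w * x\<^sup>2 / 2)" using Fb by auto
    show "((\<lambda>x. (1/w) * exp (- w * x\<^sup>2 / 2)) \<longlongrightarrow> 0) at_top" using w by real_asymp
  qed
  have lb: "(F \<longlongrightarrow> 0) at_bot"
  proof (rule Lim_null_comparison)
    show "\<forall>\<^sub>F x in at_bot. norm (F x) \<le> (1/w) * exp (- w * x\<^sup>2 / 2)" using Fb by auto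
    show "((\<lambda>x. (1/w) * exp (- w * x\<^sup>2 / 2)) \<longlongrightarrow> 0) at_bot" using w by real_asymp
  qed
  have "(LBINT x=-\<infinity>..\<infinity>. g x) = 0 - 0"
  proof (rule interval_integral_FTC_integrable)
    show "(F has_vector_derivative g x) (at x)" for x
      using der has_real_derivative_iff_has_vector_derivative by blast
    show "isCont g x" for x unfolding g_def by (intro continuous_intros) auto
    show "set_integrable lborel (einterval (-\<infinity>) \<infinity>) g"
      using ig by (simp add: set_integrable_def)
    show "((F \<circ> real_of_ereal) \<longlongrightarrow> 0) (at_right (-\<infinity>))" using lb by (simp add: ereal_tendsto_simps)
    show "((F \<circ> real_of_ereal) \<longlongrightarrow> 0) (at_left \<infinity>)" using lt by (simp add: ereal_tendsto_simps)
  qed auto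
  then have "(LINT x|lborel. g x) = 0"
    by (simp add: interval_lebesgue_integral_def set_lebesgue_integral_def)
  then have "(LINT t|lborel. t * sin (\<delta> * t) * exp (- w * t\<^sup>2 / 2)) = \<delta> / w * (LINT t|lborel. cos (\<delta> * t) * exp (- w * t\<^sup>2 / 2))"
    unfolding g_def using i1 i2 by simp
  also have "\<dots> = \<delta> * sqrt (2*pi) * exp (- \<delta>\<^sup>2 / (2*w)) / (w * sqrt w)"
    unfolding gauss_cos_scaled[OF w] by simp
  finally show "(LINT t|lborel. t * sin (\<delta> * t) * exp (- w * t\<^sup>2 / 2)) = \<delta> * sqrt (2*pi) * exp (- \<delta>\<^sup>2 / (2*w)) / (w * sqrt w)" .
qed



lemma nn_to_lint:
  fixes f :: "real \<Rightarrow> real"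
  assumes [measurable]: "f \<in> borel_measurable borel" and nn: "\<And>x. f x \<ge> 0"
    and eq: "(\<integral>\<^sup>+x. ennreal (f x) \<partial>lborel) = ennreal r" and r: "r \<ge> 0"
  shows "integrable lborel f" "(LINT x|lborel. f x) = r"
proof -
  have "has_bochner_integral lborel f r"
    by (rule has_bochner_integral_nn_integral) (use nn eq r in auto)
  then show "integrable lborel f" "(LINT x|lborel. f x) = r"
    by (auto simp: has_bochner_integral_iff)
qed

lemma besselK1_nonneg: "besselK1 z \<ge> 0"
  unfolding besselK1_def set_lebesgue_integral_def
  by (intro Bochner_Integration.integral_nonneg) (auto intro!: mult_nonneg_nonneg)

lemma K1_repr:
  fixes \<alpha> \<delta> u :: real
  assumes \<alpha>: "\<alpha> > 0" and \<delta>: "\<delta> > 0"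
  defines "r \<equiv> sqrt (\<delta>\<^sup>2 + u\<^sup>2)"
  shows "(\<integral>\<^sup>+v. ennreal (exp (-v) * EE (r\<^sup>2/2) (\<alpha>\<^sup>2/2) v) \<partial>lborel) = ennreal (2 * \<alpha> / r * besselK1 (\<alpha> * r))"
    and "integrable lborel (\<lambda>v. exp (-v) * EE (r\<^sup>2/2) (\<alpha>\<^sup>2/2) v)"
    and "(LINT v|lborel. exp (-v) * EE (r\<^sup>2/2) (\<alpha>\<^sup>2/2) v) = 2 * \<alpha> / r * besselK1 (\<alpha> * r)"
proof -
  have r: "r > 0" unfolding r_def using \<delta> by (simp add: add_pos_nonneg)
  have a: "r\<^sup>2/2 > 0" and b: "\<alpha>\<^sup>2/2 > 0" using r \<alpha> by auto
  have e1: "sqrt ((\<alpha>\<^sup>2/2) / (r\<^sup>2/2)) = \<alpha> / r" using r \<alpha> by (simp add: real_sqrt_divide)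
  have e2: "2 * sqrt (r\<^sup>2/2 * (\<alpha>\<^sup>2/2)) = \<alpha> * r" using r \<alpha>
    by (simp add: real_sqrt_mult real_sqrt_divide power_mult_distrib[symmetric])
  show 1: "(\<integral>\<^sup>+v. ennreal (exp (-v) * EE (r\<^sup>2/2) (\<alpha>\<^sup>2/2) v) \<partial>lborel) = ennreal (2 * \<alpha> / r * besselK1 (\<alpha> * r))"
    using K1_link(2)[OF a b] unfolding e1 e2 by simp
  have nn: "2 * \<alpha> / r * besselK1 (\<alpha> * r) \<ge> 0" using r \<alpha> besselK1_nonneg by simp
  show "integrable lborel (\<lambda>v. exp (-v) * EE (r\<^sup>2/2) (\<alpha>\<^sup>2/2) v)"
    by (rule nn_to_lint(1)[OF _ _ 1 nn]) auto
  show "(LINT v|lborel. exp (-v) * EE (r\<^sup>2/2) (\<alpha>\<^sup>2/2) v) = 2 * \<alpha> / r * besselK1 (\<alpha> * r)"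
    by (rule nn_to_lint(2)[OF _ _ 1 nn]) auto
qed

lemma nig_density_0:
  "nig_density \<alpha> \<beta> \<mu> \<delta> x = \<alpha> * \<delta> / pi * besselK1 (\<alpha> * sqrt (\<delta>\<^sup>2 + (x-\<mu>)\<^sup>2)) / sqrt (\<delta>\<^sup>2 + (x-\<mu>)\<^sup>2) *
      exp (\<delta> * sqrt (\<alpha>\<^sup>2 - \<beta>\<^sup>2) + \<beta> * (x - \<mu>))"
  unfolding nig_density_def Let_def ..

lemma nig_density_nonneg:
  assumes "\<alpha> > 0" "\<delta> > 0"
  shows "nig_density \<alpha> \<beta> \<mu> \<delta> x \<ge> 0"
  unfolding nig_density_0 using assms besselK1_nonneg
  by (intro mult_nonneg_nonneg divide_nonneg_nonneg) auto

lemma nig_density_meas[measurable]: "nig_density \<alpha> \<beta> \<mu> \<delta> \<in> borel_measurable borel"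
  unfolding nig_density_def[abs_def] Let_def besselK1_def set_lebesgue_integral_def by measurable

lemma total_mass:
  fixes \<alpha> \<beta> \<delta> :: real
  assumes \<alpha>: "\<alpha> > 0" and \<beta>: "\<bar>\<beta>\<bar> < \<alpha>" and \<delta>: "\<delta> > 0"
  shows "(\<integral>\<^sup>+u. ennreal (nig_density \<alpha> \<beta> 0 \<delta> u) \<partial>lborel) = 1"
proof -
  define \<gamma> where "\<gamma> = sqrt (\<alpha>\<^sup>2 - \<beta>\<^sup>2)"
  have bb: "\<beta>\<^sup>2 < \<alpha>\<^sup>2"
  proof -
    have "\<bar>\<beta>\<bar>\<^sup>2 < \<alpha>\<^sup>2" by (rule power_strict_mono) (use \<beta> in auto)
    then show ?thesis by simp
  qed
  have gg: "\<gamma>\<^sup>2 = \<alpha>\<^sup>2 - \<beta>\<^sup>2" unfolding \<gamma>_def using bb by simp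
  have g: "\<gamma> > 0" unfolding \<gamma>_def using bb by simp
  define C where "C v = \<delta> * exp (\<delta> * \<gamma>) / sqrt (2*pi) * (exp (-v/2) * EE (\<delta>\<^sup>2/2) (\<gamma>\<^sup>2/2) v)" for v
  define H where "H u v = \<delta> / (2*pi) * exp (\<delta> * \<gamma> + \<beta> * u) * (exp (-v) * EE ((\<delta>\<^sup>2 + u\<^sup>2)/2) (\<alpha>\<^sup>2/2) v)" for u v
  have H_meas[measurable]: "case_prod H \<in> borel_measurable (lborel \<Otimes>\<^sub>M lborel)"
    unfolding H_def EE_def by measurable
  have step1: "ennreal (nig_density \<alpha> \<beta> 0 \<delta> u) = (\<integral>\<^sup>+v. ennreal (H u v) \<partial>lborel)" for u
  proof -
    define r where "r = sqrt (\<delta>\<^sup>2 + u\<^sup>2)"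
    have r: "r > 0" unfolding r_def using \<delta> by (simp add: add_pos_nonneg)
    have rr: "r\<^sup>2 = \<delta>\<^sup>2 + u\<^sup>2" unfolding r_def by (simp add: add_nonneg_nonneg)
    have "(\<integral>\<^sup>+v. ennreal (H u v) \<partial>lborel) =
        (\<integral>\<^sup>+v. ennreal (\<delta> / (2*pi) * exp (\<delta> * \<gamma> + \<beta> * u)) * ennreal (exp (-v) * EE (r\<^sup>2/2) (\<alpha>\<^sup>2/2) v) \<partial>lborel)"
      unfolding H_def rr using \<delta> by (intro nn_integral_cong ennreal_mult) auto
    also have "\<dots> = ennreal (\<delta> / (2*pi) * exp (\<delta> * \<gamma> + \<beta> * u)) * ennreal (2 * \<alpha> / r * besselK1 (\<alpha> * r))"
      using K1_repr(1)[OF \<alpha> \<delta>, of u] unfolding r_def[symmetric] by (simp add: nn_integral_cmult)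
    also have "\<dots> = ennreal (\<delta> / (2*pi) * exp (\<delta> * \<gamma> + \<beta> * u) * (2 * \<alpha> / r * besselK1 (\<alpha> * r)))"
      using \<delta> \<alpha> r besselK1_nonneg by (intro ennreal_mult[symmetric]) auto
    also have "\<delta> / (2*pi) * exp (\<delta> * \<gamma> + \<beta> * u) * (2 * \<alpha> / r * besselK1 (\<alpha> * r)) = nig_density \<alpha> \<beta> 0 \<delta> u"
      unfolding nig_density_0 \<gamma>_def r_def by simp
    finally show ?thesis ..
  qed
  have step2: "(\<integral>\<^sup>+u. ennreal (H u v) \<partial>lborel) = ennreal (C v)" for v
  proof -
    define W where "W = exp v"
    have W: "W > 0" unfolding W_def by simp
    have Cnn: "C v \<ge> 0" unfolding C_def using \<delta> by (intro divide_nonneg_nonneg mult_nonneg_nonneg) auto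
    have Hn: "H u v = C v * normal_density (\<beta> * W) (sqrt W) u" for u
    proof -
      have "H u v = \<delta> / (2*pi) * exp (\<delta> * \<gamma>) * exp (-v) * exp (- (\<delta>\<^sup>2/2 * exp (-v) + \<alpha>\<^sup>2/2 * W)) *
          exp (\<beta> * u - u\<^sup>2 / (2 * W))"
        unfolding H_def EE_def W_def by (simp add: exp_add[symmetric] exp_minus field_simps)
      also have "exp (\<beta> * u - u\<^sup>2 / (2 * W)) = sqrt (2*pi*W) * exp (\<beta>\<^sup>2 * W / 2) * normal_density (\<beta> * W) (sqrt W) u"
      proof -
        define P where "P = (u - \<beta> * W)\<^sup>2 / (2 * W)"
        have arg: "\<beta> * u - u\<^sup>2 / (2 * W) = \<beta>\<^sup>2 * W / 2 + (- P)"
          unfolding P_def using W by (simp add: field_simps power2_eq_square)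
        have e: "exp (\<beta> * u - u\<^sup>2 / (2 * W)) = exp (\<beta>\<^sup>2 * W / 2) * exp (- P)"
          by (simp only: arg exp_add)
        have nd: "normal_density (\<beta> * W) (sqrt W) u = exp (- P) / sqrt (2*pi*W)"
          unfolding normal_density_def P_def using W by simp
        have sp: "sqrt (2*pi*W) > 0" using W by simp
        show ?thesis unfolding e nd using sp W by simp
      qed
      also have "\<delta> / (2*pi) * exp (\<delta> * \<gamma>) * exp (-v) * exp (- (\<delta>\<^sup>2/2 * exp (-v) + \<alpha>\<^sup>2/2 * W)) *
          (sqrt (2*pi*W) * exp (\<beta>\<^sup>2 * W / 2) * normal_density (\<beta> * W) (sqrt W) u) =
          C v * normal_density (\<beta> * W) (sqrt W) u"
      proof -
        have sW: "sqrt W = exp (v/2)" unfolding W_def by (rule real_sqrt_unique) (simp_all add: power2_eq_square exp_add[symmetric])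
        have a1: "exp (-v) * sqrt (2*pi*W) = sqrt (2*pi) * exp (-v/2)"
          unfolding real_sqrt_mult sW by (simp add: exp_add[symmetric] mult_ac)
        have a2: "exp (- (\<delta>\<^sup>2/2 * exp (-v) + \<alpha>\<^sup>2/2 * W)) * exp (\<beta>\<^sup>2 * W / 2) = EE (\<delta>\<^sup>2/2) (\<gamma>\<^sup>2/2) v"
          unfolding EE_def gg W_def by (simp add: exp_add[symmetric] field_simps)
        have dd: "\<delta> / (2*pi) * sqrt (2*pi) = \<delta> / sqrt (2*pi)"
          by (simp add: field_simps real_sqrt_mult)
        define X where "X = exp (- (\<delta>\<^sup>2/2 * exp (-v) + \<alpha>\<^sup>2/2 * W))"
        define Y where "Y = exp (\<beta>\<^sup>2 * W / 2)"
        define N where "N = normal_density (\<beta> * W) (sqrt W) u"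
        have "\<delta> / (2*pi) * exp (\<delta> * \<gamma>) * exp (-v) * X * (sqrt (2*pi*W) * Y * N) =
            \<delta> / (2*pi) * exp (\<delta> * \<gamma>) * (exp (-v) * sqrt (2*pi*W)) * (X * Y) * N"
          by (simp only: mult_ac)
        also have "\<dots> = (\<delta> / (2*pi) * sqrt (2*pi)) * exp (\<delta> * \<gamma>) * (exp (-v/2) * EE (\<delta>\<^sup>2/2) (\<gamma>\<^sup>2/2) v) * N"
          unfolding a1 X_def Y_def a2 by (simp only: mult_ac)
        also have "\<dots> = C v * N" unfolding dd C_def by (simp add: field_simps)
        finally show ?thesis unfolding X_def Y_def N_def .
      qed
      finally show ?thesis .
    qed
    have "(\<integral>\<^sup>+u. ennreal (H u v) \<partial>lborel) = (\<integral>\<^sup>+u. ennreal (C v) * ennreal (normal_density (\<beta> * W) (sqrt W) u) \<partial>lborel)"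
      unfolding Hn by (intro nn_integral_cong ennreal_mult) (use Cnn in auto)
    also have "\<dots> = ennreal (C v) * (\<integral>\<^sup>+u. ennreal (normal_density (\<beta> * W) (sqrt W) u) \<partial>lborel)"
      by (rule nn_integral_cmult) measurable
    also have "(\<integral>\<^sup>+u. ennreal (normal_density (\<beta> * W) (sqrt W) u) \<partial>lborel) = ennreal 1"
      using W by (subst nn_integral_eq_integral) auto
    finally show ?thesis by simp
  qed
  have "(\<integral>\<^sup>+u. ennreal (nig_density \<alpha> \<beta> 0 \<delta> u) \<partial>lborel) = (\<integral>\<^sup>+u. \<integral>\<^sup>+v. ennreal (H u v) \<partial>lborel \<partial>lborel)"
    by (simp add: step1)
  also have "\<dots> = (\<integral>\<^sup>+v. \<integral>\<^sup>+u. ennreal (H u v) \<partial>lborel \<partial>lborel)"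
    by (rule lborel_pair.Fubini'[symmetric]) measurable
  also have "\<dots> = (\<integral>\<^sup>+v. ennreal (\<delta> * exp (\<delta> * \<gamma>) / sqrt (2*pi)) * ennreal (exp (-v/2) * EE (\<delta>\<^sup>2/2) (\<gamma>\<^sup>2/2) v) \<partial>lborel)"
    unfolding step2 C_def using \<delta> by (intro nn_integral_cong ennreal_mult) auto
  also have "\<dots> = ennreal (\<delta> * exp (\<delta> * \<gamma>) / sqrt (2*pi)) * ennreal (sqrt (pi / (\<delta>\<^sup>2/2)) * exp (- 2 * sqrt (\<delta>\<^sup>2/2 * (\<gamma>\<^sup>2/2))))"
    using J2[of "\<delta>\<^sup>2/2" "\<gamma>\<^sup>2/2"] \<delta> g by (simp add: nn_integral_cmult)
  also have "\<dots> = ennreal ((\<delta> * exp (\<delta> * \<gamma>) / sqrt (2*pi)) * (sqrt (pi / (\<delta>\<^sup>2/2)) * exp (- 2 * sqrt (\<delta>\<^sup>2/2 * (\<gamma>\<^sup>2/2)))))"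
    using \<delta> by (intro ennreal_mult[symmetric]) auto
  also have "(\<delta> * exp (\<delta> * \<gamma>) / sqrt (2*pi)) * (sqrt (pi / (\<delta>\<^sup>2/2)) * exp (- 2 * sqrt (\<delta>\<^sup>2/2 * (\<gamma>\<^sup>2/2)))) = 1"
  proof -
    have s1: "sqrt (\<delta>\<^sup>2/2 * (\<gamma>\<^sup>2/2)) = \<delta> * \<gamma> / 2" using \<delta> g
      by (simp add: real_sqrt_mult real_sqrt_divide)
    have s2: "sqrt (pi / (\<delta>\<^sup>2/2)) = sqrt (2*pi) / \<delta>" using \<delta>
      by (simp add: real_sqrt_mult real_sqrt_divide field_simps)
    show ?thesis unfolding s1 s2 using \<delta> by (simp add: exp_minus field_simps)
  qed
  finally show ?thesis by simp
qed



lemma exp_tail: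
  fixes c y :: real assumes c: "c > 0"
  shows "set_integrable lborel {y<..} (\<lambda>t. exp (- c * t))"
    and "(LINT t:{y<..}|lborel. exp (- c * t)) = exp (- c * y) / c"
proof -
  define F where "F t = - exp (- c * t) / c" for t
  have der: "DERIV F t :> exp (- c * t)" for t
    unfolding F_def using c by (auto intro!: derivative_eq_intros)
  have A: "((F \<circ> real_of_ereal) \<longlongrightarrow> F y) (at_right (ereal y))"
    unfolding ereal_tendsto_simps F_def
    by (intro tendsto_intros continuous_on_tendsto_compose[of UNIV] tendsto_ident_at) (use c in auto)
  have B: "((F \<circ> real_of_ereal) \<longlongrightarrow> 0) (at_left \<infinity>)"
    unfolding ereal_tendsto_simps F_def using c by real_asymp
  note r = interval_integral_FTC_nonneg[of "ereal y" \<infinity> F "\<lambda>t. exp (- c * t)" "F y" 0, OF _ der _ _ A B]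
  show "set_integrable lborel {y<..} (\<lambda>t. exp (- c * t))"
    using r(1) by simp
  show "(LINT t:{y<..}|lborel. exp (- c * t)) = exp (- c * y) / c"
    using r(2) by (simp add: interval_integral_to_infinity_eq F_def)
qed

lemma exp_abs_nn:
  fixes c :: real assumes c: "c > 0"
  shows "(\<integral>\<^sup>+t. ennreal (exp (- c * \<bar>t\<bar>)) \<partial>lborel) = ennreal (2 / c)"
proof -
  have "(\<integral>\<^sup>+t. ennreal (exp (- c * \<bar>t\<bar>)) \<partial>lborel) = 2 * (\<integral>\<^sup>+t. ennreal (exp (- c * \<bar>t\<bar>)) * indicator {0..} t \<partial>lborel)"
    by (rule nn_fold) auto
  also have "(\<integral>\<^sup>+t. ennreal (exp (- c * \<bar>t\<bar>)) * indicator {0..} t \<partial>lborel) =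
       (\<integral>\<^sup>+t. ennreal (indicator {0<..} t * exp (- c * t)) \<partial>lborel)"
    using AE_lborel_singleton[of 0]
    by (intro nn_integral_cong_AE) (auto split: split_indicator elim!: eventually_mono)
  also have "\<dots> = ennreal (LINT t:{0<..}|lborel. exp (- c * t))"
    using exp_tail(1)[OF c, of 0] unfolding set_integrable_def set_lebesgue_integral_def
    by (subst nn_integral_eq_integral) auto
  also have "\<dots> = ennreal (1/c)" using exp_tail(2)[OF c, of 0] by simp
  also have "2 * ennreal (1/c) = ennreal (2/c)"
    using c by (subst ennreal_numeral[symmetric], subst ennreal_mult[symmetric]) auto
  finally show ?thesis .
qed

lemma exp_abs_int:
  fixes c :: real assumes c: "c > 0"
  shows "integrable lborel (\<lambda>t. exp (- c * \<bar>t\<bar>))"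
  by (rule integrableI_nonneg) (use exp_abs_nn[OF c] in auto)



lemma sub_repr:
  fixes u S :: real assumes u: "u > 0" and S: "S > 0"
  shows "integrable lborel (\<lambda>v. exp (v/2) * EE (u\<^sup>2/2) (S\<^sup>2/2) v)"
    and "(\<integral>\<^sup>+v. ennreal (exp (v/2) * EE (u\<^sup>2/2) (S\<^sup>2/2) v) \<partial>lborel) = ennreal (sqrt (2*pi) * exp (- u * S) / S)"
    and "(LINT v|lborel. exp (v/2) * EE (u\<^sup>2/2) (S\<^sup>2/2) v) = sqrt (2*pi) * exp (- u * S) / S"
proof -
  have e1: "sqrt (pi / (S\<^sup>2/2)) = sqrt (2*pi) / S" using S
    by (simp add: real_sqrt_divide real_sqrt_mult field_simps)
  have e2: "2 * sqrt (u\<^sup>2/2 * (S\<^sup>2/2)) = u * S" using u S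
    by (simp add: real_sqrt_mult real_sqrt_divide power_mult_distrib[symmetric])
  show 1: "(\<integral>\<^sup>+v. ennreal (exp (v/2) * EE (u\<^sup>2/2) (S\<^sup>2/2) v) \<partial>lborel) = ennreal (sqrt (2*pi) * exp (- u * S) / S)"
    using J1[of "u\<^sup>2/2" "S\<^sup>2/2"] u S unfolding e1 mult_minus_left e2 by simp
  have nn: "sqrt (2*pi) * exp (- u * S) / S \<ge> 0" using S by simp
  show "integrable lborel (\<lambda>v. exp (v/2) * EE (u\<^sup>2/2) (S\<^sup>2/2) v)"
    by (rule nn_to_lint(1)[OF _ _ 1 nn]) auto
  show "(LINT v|lborel. exp (v/2) * EE (u\<^sup>2/2) (S\<^sup>2/2) v) = sqrt (2*pi) * exp (- u * S) / S"
    by (rule nn_to_lint(2)[OF _ _ 1 nn]) auto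
qed

lemma P1:
  fixes \<alpha> \<delta> u :: real
  assumes \<alpha>: "\<alpha> > 0" and \<delta>: "\<delta> > 0" and u: "u > 0"
  shows "integrable lborel (\<lambda>t. t * sin (\<delta> * t) * exp (- u * sqrt (t\<^sup>2 + \<alpha>\<^sup>2)) / sqrt (t\<^sup>2 + \<alpha>\<^sup>2))"
    and "(LINT t|lborel. t * sin (\<delta> * t) * exp (- u * sqrt (t\<^sup>2 + \<alpha>\<^sup>2)) / sqrt (t\<^sup>2 + \<alpha>\<^sup>2)) =
          2 * \<alpha> * \<delta> * besselK1 (\<alpha> * sqrt (\<delta>\<^sup>2 + u\<^sup>2)) / sqrt (\<delta>\<^sup>2 + u\<^sup>2)"
proof -
  define S where "S t = sqrt (t\<^sup>2 + \<alpha>\<^sup>2)" for t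
  have S: "S t > 0" for t unfolding S_def using \<alpha> by (simp add: add_nonneg_pos)
  have SS: "(S t)\<^sup>2 = t\<^sup>2 + \<alpha>\<^sup>2" for t unfolding S_def by (simp add: add_nonneg_nonneg)
  have St: "\<bar>t\<bar> \<le> S t" for t unfolding S_def by (rule real_le_rsqrt) (use \<alpha> in simp)
  have S_meas[measurable]: "S \<in> borel_measurable borel" unfolding S_def by measurable
  define \<Phi> where "\<Phi> t v = t * sin (\<delta> * t) * (exp (v/2) * EE (u\<^sup>2/2) ((S t)\<^sup>2/2) v)" for t v
  have \<Phi>_meas[measurable]: "case_prod \<Phi> \<in> borel_measurable (lborel \<Otimes>\<^sub>M lborel)"
    unfolding \<Phi>_def EE_def by measurable
  have bnd: "\<bar>t * sin (\<delta> * t)\<bar> * (sqrt (2*pi) * exp (- u * S t) / S t) \<le> sqrt (2*pi) * exp (- u * \<bar>t\<bar>)" for t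
  proof -
    have "\<bar>t * sin (\<delta> * t)\<bar> \<le> \<bar>t\<bar>" by (simp add: abs_mult mult_left_le abs_sin_le_one)
    also have "\<dots> \<le> S t" by (rule St)
    finally have 1: "\<bar>t * sin (\<delta> * t)\<bar> / S t \<le> 1" using S[of t] by simp
    have 2: "exp (- u * S t) \<le> exp (- u * \<bar>t\<bar>)" using St[of t] u by simp
    have "\<bar>t * sin (\<delta> * t)\<bar> * (sqrt (2*pi) * exp (- u * S t) / S t) = (\<bar>t * sin (\<delta> * t)\<bar> / S t) * (sqrt (2*pi) * exp (- u * S t))"
      by simp
    also have "\<dots> \<le> 1 * (sqrt (2*pi) * exp (- u * \<bar>t\<bar>))"
      using 1 2 by (intro mult_mono) auto
    finally show ?thesis by simp
  qed
  have int\<Phi>: "integrable (lborel \<Otimes>\<^sub>M lborel) (case_prod \<Phi>)"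
  proof (rule integrableI_bounded)
    have "(\<integral>\<^sup>+p. ennreal (norm (case_prod \<Phi> p)) \<partial>(lborel \<Otimes>\<^sub>M lborel)) =
        (\<integral>\<^sup>+t. \<integral>\<^sup>+v. ennreal (norm (\<Phi> t v)) \<partial>lborel \<partial>lborel)"
      by (subst lborel.nn_integral_fst[symmetric]) auto
    also have "\<dots> = (\<integral>\<^sup>+t. ennreal \<bar>t * sin (\<delta> * t)\<bar> * ennreal (sqrt (2*pi) * exp (- u * S t) / S t) \<partial>lborel)"
    proof (intro nn_integral_cong)
      fix t
      have "(\<integral>\<^sup>+v. ennreal (norm (\<Phi> t v)) \<partial>lborel) =
          (\<integral>\<^sup>+v. ennreal \<bar>t * sin (\<delta> * t)\<bar> * ennreal (exp (v/2) * EE (u\<^sup>2/2) ((S t)\<^sup>2/2) v) \<partial>lborel)"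
        unfolding \<Phi>_def by (intro nn_integral_cong) (simp add: abs_mult ennreal_mult)
      also have "\<dots> = ennreal \<bar>t * sin (\<delta> * t)\<bar> * ennreal (sqrt (2*pi) * exp (- u * S t) / S t)"
        by (simp add: nn_integral_cmult sub_repr(2)[OF u S])
      finally show "(\<integral>\<^sup>+v. ennreal (norm (\<Phi> t v)) \<partial>lborel) = ennreal \<bar>t * sin (\<delta> * t)\<bar> * ennreal (sqrt (2*pi) * exp (- u * S t) / S t)" .
    qed
    also have "\<dots> \<le> (\<integral>\<^sup>+t. ennreal (sqrt (2*pi)) * ennreal (exp (- u * \<bar>t\<bar>)) \<partial>lborel)"
    proof (intro nn_integral_mono)
      fix t
      have "ennreal \<bar>t * sin (\<delta> * t)\<bar> * ennreal (sqrt (2*pi) * exp (- u * S t) / S t) =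
          ennreal (\<bar>t * sin (\<delta> * t)\<bar> * (sqrt (2*pi) * exp (- u * S t) / S t))"
        using S[of t] by (intro ennreal_mult[symmetric]) auto
      also have "\<dots> \<le> ennreal (sqrt (2*pi) * exp (- u * \<bar>t\<bar>))" by (intro ennreal_leI bnd)
      also have "\<dots> = ennreal (sqrt (2*pi)) * ennreal (exp (- u * \<bar>t\<bar>))" by (intro ennreal_mult) auto
      finally show "ennreal \<bar>t * sin (\<delta> * t)\<bar> * ennreal (sqrt (2*pi) * exp (- u * S t) / S t) \<le> ennreal (sqrt (2*pi)) * ennreal (exp (- u * \<bar>t\<bar>))" .
    qed
    also have "\<dots> = ennreal (sqrt (2*pi)) * ennreal (2 / u)"
      using exp_abs_nn[OF u] by (simp add: nn_integral_cmult)
    also have "\<dots> < \<infinity>" by (simp add: ennreal_mult_less_top)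
    finally show "(\<integral>\<^sup>+p. ennreal (norm (case_prod \<Phi> p)) \<partial>(lborel \<Otimes>\<^sub>M lborel)) < \<infinity>" .
  qed measurable
  define X where "X = (LINT t|lborel. t * sin (\<delta> * t) * exp (- u * S t) / S t)"
  have fub: "(LINT v|lborel. LINT t|lborel. \<Phi> t v) = (LINT t|lborel. LINT v|lborel. \<Phi> t v)"
    by (rule lborel_pair.Fubini_integral[OF int\<Phi>])
  have rhs: "(LINT t|lborel. LINT v|lborel. \<Phi> t v) = sqrt (2*pi) * X"
  proof -
    have "(LINT t|lborel. LINT v|lborel. \<Phi> t v) = (LINT t|lborel. sqrt (2*pi) * (t * sin (\<delta> * t) * exp (- u * S t) / S t))"
      unfolding \<Phi>_def by (intro Bochner_Integration.integral_cong refl) (simp add: sub_repr(3)[OF u S])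
    also have "\<dots> = sqrt (2*pi) * X" unfolding X_def by (rule integral_mult_right_zero)
    finally show ?thesis .
  qed
  have lhs: "(LINT v|lborel. LINT t|lborel. \<Phi> t v) = \<delta> * sqrt (2*pi) * (2 * \<alpha> / sqrt (\<delta>\<^sup>2 + u\<^sup>2) * besselK1 (\<alpha> * sqrt (\<delta>\<^sup>2 + u\<^sup>2)))"
  proof -
    have inner: "(LINT t|lborel. \<Phi> t v) = \<delta> * sqrt (2*pi) * (exp (-v) * EE ((\<delta>\<^sup>2 + u\<^sup>2)/2) (\<alpha>\<^sup>2/2) v)" for v
    proof -
      define K where "K = exp (v/2) * exp (- (u\<^sup>2/2 * exp (-v) + \<alpha>\<^sup>2/2 * exp v))"
      have "\<Phi> t v = K * (t * sin (\<delta> * t) * exp (- exp v * t\<^sup>2 / 2))" for t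
        unfolding \<Phi>_def K_def EE_def SS by (simp add: exp_add[symmetric] field_simps)
      then have "(LINT t|lborel. \<Phi> t v) = K * (LINT t|lborel. t * sin (\<delta> * t) * exp (- exp v * t\<^sup>2 / 2))"
        by simp
      also have "\<dots> = K * (\<delta> * sqrt (2*pi) * exp (- \<delta>\<^sup>2 / (2*exp v)) / (exp v * sqrt (exp v)))"
        using gauss_sin(2)[of "exp v" \<delta>] by simp
      also have "\<dots> = \<delta> * sqrt (2*pi) * (exp (-v) * EE ((\<delta>\<^sup>2 + u\<^sup>2)/2) (\<alpha>\<^sup>2/2) v)"
      proof -
        have sW: "sqrt (exp v) = exp (v/2)" by (rule real_sqrt_unique) (simp_all add: power2_eq_square exp_add[symmetric])
        have "exp (v/2) / (exp v * exp (v/2)) = exp (-v)" by (simp add: exp_minus field_simps)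
        moreover have "exp (- (u\<^sup>2/2 * exp (-v) + \<alpha>\<^sup>2/2 * exp v)) * exp (- \<delta>\<^sup>2 / (2*exp v)) = EE ((\<delta>\<^sup>2 + u\<^sup>2)/2) (\<alpha>\<^sup>2/2) v"
          unfolding EE_def by (simp add: exp_add[symmetric] exp_minus field_simps)
        ultimately show ?thesis unfolding K_def sW
          by (simp add: field_simps)
      qed
      finally show ?thesis .
    qed
    have "(LINT v|lborel. LINT t|lborel. \<Phi> t v) = (LINT v|lborel. \<delta> * sqrt (2*pi) * (exp (-v) * EE ((\<delta>\<^sup>2 + u\<^sup>2)/2) (\<alpha>\<^sup>2/2) v))"
      by (simp add: inner)
    also have "\<dots> = \<delta> * sqrt (2*pi) * (LINT v|lborel. exp (-v) * EE ((\<delta>\<^sup>2 + u\<^sup>2)/2) (\<alpha>\<^sup>2/2) v)"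
      by simp
    also have "(LINT v|lborel. exp (-v) * EE ((\<delta>\<^sup>2 + u\<^sup>2)/2) (\<alpha>\<^sup>2/2) v) = 2 * \<alpha> / sqrt (\<delta>\<^sup>2 + u\<^sup>2) * besselK1 (\<alpha> * sqrt (\<delta>\<^sup>2 + u\<^sup>2))"
      using K1_repr(3)[OF \<alpha> \<delta>, of u] by (simp add: add_nonneg_nonneg)
    finally show ?thesis .
  qed
  show "integrable lborel (\<lambda>t. t * sin (\<delta> * t) * exp (- u * sqrt (t\<^sup>2 + \<alpha>\<^sup>2)) / sqrt (t\<^sup>2 + \<alpha>\<^sup>2))"
  proof (rule Bochner_Integration.integrable_bound[OF exp_abs_int[OF u]])
    show "AE t in lborel. norm (t * sin (\<delta> * t) * exp (- u * sqrt (t\<^sup>2 + \<alpha>\<^sup>2)) / sqrt (t\<^sup>2 + \<alpha>\<^sup>2)) \<le> norm (exp (- u * \<bar>t\<bar>))"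
    proof (intro always_eventually allI)
      fix t
      define A where "A = \<bar>t * sin (\<delta> * t) * exp (- u * S t) / S t\<bar>"
      define B where "B = exp (- u * \<bar>t\<bar>)"
      have "sqrt (2*pi) * A \<le> sqrt (2*pi) * B"
        using bnd[of t] S[of t] unfolding A_def B_def by (simp add: abs_mult mult_ac)
      then have "A \<le> B" by (rule mult_left_le_imp_le) simp
      then have "\<bar>t * sin (\<delta> * t) * exp (- u * S t) / S t\<bar> \<le> exp (- u * \<bar>t\<bar>)" unfolding A_def B_def .
      then show "norm (t * sin (\<delta> * t) * exp (- u * sqrt (t\<^sup>2 + \<alpha>\<^sup>2)) / sqrt (t\<^sup>2 + \<alpha>\<^sup>2)) \<le> norm (exp (- u * \<bar>t\<bar>))"
        unfolding S_def by simp
    qed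
  qed measurable
  have "sqrt (2*pi) * X = \<delta> * sqrt (2*pi) * (2 * \<alpha> / sqrt (\<delta>\<^sup>2 + u\<^sup>2) * besselK1 (\<alpha> * sqrt (\<delta>\<^sup>2 + u\<^sup>2)))"
    using fub lhs rhs by simp
  then have "sqrt (2*pi) * X = sqrt (2*pi) * (2 * \<alpha> * \<delta> * besselK1 (\<alpha> * sqrt (\<delta>\<^sup>2 + u\<^sup>2)) / sqrt (\<delta>\<^sup>2 + u\<^sup>2))"
    by (simp add: field_simps)
  then have "X = 2 * \<alpha> * \<delta> * besselK1 (\<alpha> * sqrt (\<delta>\<^sup>2 + u\<^sup>2)) / sqrt (\<delta>\<^sup>2 + u\<^sup>2)"
    by (subst (asm) mult_left_cancel) auto
  then show "(LINT t|lborel. t * sin (\<delta> * t) * exp (- u * sqrt (t\<^sup>2 + \<alpha>\<^sup>2)) / sqrt (t\<^sup>2 + \<alpha>\<^sup>2)) =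
          2 * \<alpha> * \<delta> * besselK1 (\<alpha> * sqrt (\<delta>\<^sup>2 + u\<^sup>2)) / sqrt (\<delta>\<^sup>2 + u\<^sup>2)"
    unfolding X_def S_def .
qed



lemma tail:
  fixes \<alpha> \<beta> \<delta> y :: real
  assumes \<alpha>: "\<alpha> > 0" and \<beta>: "\<bar>\<beta>\<bar> < \<alpha>" and \<delta>: "\<delta> > 0" and y: "y > 0"
  shows "(LINT u:{y<..}|lborel. nig_density \<alpha> \<beta> 0 \<delta> u) =
    exp (\<delta> * sqrt (\<alpha>\<^sup>2 - \<beta>\<^sup>2)) / (2*pi) *
      (LINT t|lborel. t * exp (- y * (sqrt (t\<^sup>2 + \<alpha>\<^sup>2) - \<beta>)) /
           (sqrt (t\<^sup>2 + \<alpha>\<^sup>2) * (sqrt (t\<^sup>2 + \<alpha>\<^sup>2) - \<beta>)) * sin (\<delta> * t))"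
proof -
  define \<gamma> where "\<gamma> = sqrt (\<alpha>\<^sup>2 - \<beta>\<^sup>2)"
  define S where "S t = sqrt (t\<^sup>2 + \<alpha>\<^sup>2)" for t
  define \<kappa> where "\<kappa> = \<alpha> - \<bar>\<beta>\<bar>"
  have \<kappa>: "\<kappa> > 0" unfolding \<kappa>_def using \<beta> by simp
  have S: "S t > 0" for t unfolding S_def using \<alpha> by (simp add: add_nonneg_pos)
  have St: "\<bar>t\<bar> \<le> S t" for t unfolding S_def by (rule real_le_rsqrt) (use \<alpha> in simp)
  have Sa: "\<alpha> \<le> S t" for t unfolding S_def by (rule real_le_rsqrt) (use \<alpha> in simp)
  have Sb: "S t - \<beta> \<ge> \<kappa>" for t using Sa[of t] unfolding \<kappa>_def by (simp add: abs_if split: if_splits)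
  have S_meas[measurable]: "S \<in> borel_measurable borel" unfolding S_def by measurable
  define \<Psi> where "\<Psi> u t = indicator {y<..} u * (exp (\<beta> * u) * (t * sin (\<delta> * t) * exp (- u * S t) / S t))" for u t
  have \<Psi>_meas[measurable]: "case_prod \<Psi> \<in> borel_measurable (lborel \<Otimes>\<^sub>M lborel)"
    unfolding \<Psi>_def by measurable
  define G where "G u t = indicator {y<..} u * exp (- \<kappa> * (u - y)) * (exp (y * \<bar>\<beta>\<bar>) * exp (- y * \<bar>t\<bar>))" for u t
  have \<Psi>G: "norm (\<Psi> u t) \<le> G u t" for u t
  proof (cases "u > y")
    case True
    have "\<bar>t * sin (\<delta> * t)\<bar> \<le> \<bar>t\<bar>" by (simp add: abs_mult mult_left_le abs_sin_le_one)
    also have "\<dots> \<le> S t" by (rule St)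
    finally have 1: "\<bar>t * sin (\<delta> * t)\<bar> / S t \<le> 1" using S[of t] by simp
    have "norm (\<Psi> u t) = (\<bar>t * sin (\<delta> * t)\<bar> / S t) * exp (- u * (S t - \<beta>))"
      unfolding \<Psi>_def using True S[of t] by (simp add: abs_mult exp_add[symmetric] field_simps)
    also have "\<dots> \<le> 1 * exp (- u * (S t - \<beta>))" using 1 by (intro mult_right_mono) auto
    also have "exp (- u * (S t - \<beta>)) = exp (- (u - y) * (S t - \<beta>)) * exp (y * \<beta>) * exp (- y * S t)"
      by (simp add: exp_add[symmetric] algebra_simps)
    also have "\<dots> \<le> exp (- \<kappa> * (u - y)) * exp (y * \<bar>\<beta>\<bar>) * exp (- y * \<bar>t\<bar>)"
    proof (intro mult_mono)
      show "exp (- (u - y) * (S t - \<beta>)) \<le> exp (- \<kappa> * (u - y))"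
        using mult_right_mono[OF Sb[of t], of "u-y"] True by (simp add: algebra_simps)
      show "exp (y * \<beta>) \<le> exp (y * \<bar>\<beta>\<bar>)" using y by (simp add: mult_left_mono)
      show "exp (- y * S t) \<le> exp (- y * \<bar>t\<bar>)" using y St[of t] by simp
    qed auto
    finally show ?thesis unfolding G_def using True by (simp add: mult.assoc)
  next
    case False
    then show ?thesis unfolding \<Psi>_def G_def by simp
  qed
  have int\<Psi>: "integrable (lborel \<Otimes>\<^sub>M lborel) (case_prod \<Psi>)"
  proof (rule integrableI_bounded)
    have "(\<integral>\<^sup>+p. ennreal (norm (case_prod \<Psi> p)) \<partial>(lborel \<Otimes>\<^sub>M lborel)) =
        (\<integral>\<^sup>+u. \<integral>\<^sup>+t. ennreal (norm (\<Psi> u t)) \<partial>lborel \<partial>lborel)"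
      by (subst lborel.nn_integral_fst[symmetric]) auto
    also have "\<dots> \<le> (\<integral>\<^sup>+u. \<integral>\<^sup>+t. ennreal (indicator {y<..} u * exp (- \<kappa> * (u - y)) * exp (y * \<bar>\<beta>\<bar>)) * ennreal (exp (- y * \<bar>t\<bar>)) \<partial>lborel \<partial>lborel)"
    proof (intro nn_integral_mono)
      fix u t
      have "ennreal (norm (\<Psi> u t)) \<le> ennreal (G u t)" by (intro ennreal_leI \<Psi>G)
      also have "\<dots> = ennreal (indicator {y<..} u * exp (- \<kappa> * (u - y)) * exp (y * \<bar>\<beta>\<bar>)) * ennreal (exp (- y * \<bar>t\<bar>))"
        unfolding G_def by (subst ennreal_mult[symmetric]) (auto simp: mult.assoc)
      finally show "ennreal (norm (\<Psi> u t)) \<le> ennreal (indicator {y<..} u * exp (- \<kappa> * (u - y)) * exp (y * \<bar>\<beta>\<bar>)) * ennreal (exp (- y * \<bar>t\<bar>))" .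
    qed
    also have "\<dots> = (\<integral>\<^sup>+u. ennreal (indicator {y<..} u * exp (- \<kappa> * (u - y)) * exp (y * \<bar>\<beta>\<bar>)) * ennreal (2 / y) \<partial>lborel)"
      using exp_abs_nn[OF y] by (simp add: nn_integral_cmult)
    also have "\<dots> = (\<integral>\<^sup>+u. ennreal (indicator {y<..} u * exp (- \<kappa> * u)) * ennreal (exp (\<kappa> * y) * exp (y * \<bar>\<beta>\<bar>) * (2 / y)) \<partial>lborel)"
    proof (intro nn_integral_cong)
      fix u
      have "ennreal (indicator {y<..} u * exp (- \<kappa> * (u - y)) * exp (y * \<bar>\<beta>\<bar>)) * ennreal (2 / y) =
          ennreal (indicator {y<..} u * exp (- \<kappa> * (u - y)) * exp (y * \<bar>\<beta>\<bar>) * (2 / y))"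
        using y by (subst ennreal_mult) auto
      also have "indicator {y<..} u * exp (- \<kappa> * (u - y)) * exp (y * \<bar>\<beta>\<bar>) * (2 / y) =
          (indicator {y<..} u * exp (- \<kappa> * u)) * (exp (\<kappa> * y) * exp (y * \<bar>\<beta>\<bar>) * (2 / y))"
        by (simp add: exp_add[symmetric] algebra_simps)
      also have "ennreal \<dots> = ennreal (indicator {y<..} u * exp (- \<kappa> * u)) * ennreal (exp (\<kappa> * y) * exp (y * \<bar>\<beta>\<bar>) * (2 / y))"
        using y by (subst ennreal_mult) auto
      finally show "ennreal (indicator {y<..} u * exp (- \<kappa> * (u - y)) * exp (y * \<bar>\<beta>\<bar>)) * ennreal (2 / y) =
          ennreal (indicator {y<..} u * exp (- \<kappa> * u)) * ennreal (exp (\<kappa> * y) * exp (y * \<bar>\<beta>\<bar>) * (2 / y))" .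
    qed
    also have "\<dots> = (\<integral>\<^sup>+u. ennreal (indicator {y<..} u * exp (- \<kappa> * u)) \<partial>lborel) * ennreal (exp (\<kappa> * y) * exp (y * \<bar>\<beta>\<bar>) * (2 / y))"
      by (rule nn_integral_multc) measurable
    also have "(\<integral>\<^sup>+u. ennreal (indicator {y<..} u * exp (- \<kappa> * u)) \<partial>lborel) = ennreal (LINT u:{y<..}|lborel. exp (- \<kappa> * u))"
      using exp_tail(1)[OF \<kappa>, of y] unfolding set_integrable_def set_lebesgue_integral_def
      by (subst nn_integral_eq_integral) auto
    also have "ennreal (LINT u:{y<..}|lborel. exp (- \<kappa> * u)) * ennreal (exp (\<kappa> * y) * exp (y * \<bar>\<beta>\<bar>) * (2 / y)) < \<infinity>"
      by (simp add: ennreal_mult_less_top)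
    finally show "(\<integral>\<^sup>+p. ennreal (norm (case_prod \<Psi> p)) \<partial>(lborel \<Otimes>\<^sub>M lborel)) < \<infinity>" .
  qed measurable
  have fub: "(LINT t|lborel. LINT u|lborel. \<Psi> u t) = (LINT u|lborel. LINT t|lborel. \<Psi> u t)"
    by (rule lborel_pair.Fubini_integral[OF int\<Psi>])
  have lhs: "(LINT u|lborel. LINT t|lborel. \<Psi> u t) = 2 * pi * exp (- \<delta> * \<gamma>) * (LINT u:{y<..}|lborel. nig_density \<alpha> \<beta> 0 \<delta> u)"
  proof -
    have "(LINT t|lborel. \<Psi> u t) = 2 * pi * exp (- \<delta> * \<gamma>) * (indicator {y<..} u * nig_density \<alpha> \<beta> 0 \<delta> u)" for u
    proof (cases "u > y")
      case True
      then have u: "u > 0" using y by simp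
      have e: "\<Psi> u t = exp (\<beta> * u) * (t * sin (\<delta> * t) * exp (- u * S t) / S t)" for t
        unfolding \<Psi>_def using True by simp
      have "(LINT t|lborel. \<Psi> u t) = (LINT t|lborel. exp (\<beta> * u) * (t * sin (\<delta> * t) * exp (- u * S t) / S t))"
        unfolding e ..
      also have "\<dots> = exp (\<beta> * u) * (LINT t|lborel. t * sin (\<delta> * t) * exp (- u * S t) / S t)"
        by (rule integral_mult_right_zero)
      also have "\<dots> = exp (\<beta> * u) * (2 * \<alpha> * \<delta> * besselK1 (\<alpha> * sqrt (\<delta>\<^sup>2 + u\<^sup>2)) / sqrt (\<delta>\<^sup>2 + u\<^sup>2))"
        unfolding S_def using P1(2)[OF \<alpha> \<delta> u] by simp
      also have "\<dots> = 2 * pi * exp (- \<delta> * \<gamma>) * (indicator {y<..} u * nig_density \<alpha> \<beta> 0 \<delta> u)"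
        unfolding nig_density_0 \<gamma>_def[symmetric] using True by (simp add: exp_add exp_minus field_simps)
      finally show ?thesis .
    next
      case False
      then show ?thesis unfolding \<Psi>_def by simp
    qed
    then have "(LINT u|lborel. LINT t|lborel. \<Psi> u t) = (LINT u|lborel. 2 * pi * exp (- \<delta> * \<gamma>) * (indicator {y<..} u * nig_density \<alpha> \<beta> 0 \<delta> u))"
      by simp
    also have "\<dots> = 2 * pi * exp (- \<delta> * \<gamma>) * (LINT u|lborel. indicator {y<..} u * nig_density \<alpha> \<beta> 0 \<delta> u)"
      by (rule integral_mult_right_zero)
    also have "(LINT u|lborel. indicator {y<..} u * nig_density \<alpha> \<beta> 0 \<delta> u) = (LINT u:{y<..}|lborel. nig_density \<alpha> \<beta> 0 \<delta> u)"
      unfolding set_lebesgue_integral_def by simp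
    finally show ?thesis .
  qed
  have rhs: "(LINT t|lborel. LINT u|lborel. \<Psi> u t) =
      (LINT t|lborel. t * exp (- y * (S t - \<beta>)) / (S t * (S t - \<beta>)) * sin (\<delta> * t))"
  proof (intro Bochner_Integration.integral_cong refl)
    fix t
    have Sk: "S t - \<beta> > 0" using Sb[of t] \<kappa> by linarith
    have "\<Psi> u t = (t * sin (\<delta> * t) / S t) * (indicator {y<..} u * exp (- (S t - \<beta>) * u))" for u
      unfolding \<Psi>_def by (simp add: exp_add[symmetric] algebra_simps)
    then have "(LINT u|lborel. \<Psi> u t) = (LINT u|lborel. (t * sin (\<delta> * t) / S t) * (indicator {y<..} u * exp (- (S t - \<beta>) * u)))"
      by presburger
    also have "\<dots> = (t * sin (\<delta> * t) / S t) * (LINT u|lborel. indicator {y<..} u * exp (- (S t - \<beta>) * u))"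
      by (rule integral_mult_right_zero)
    also have "(LINT u|lborel. indicator {y<..} u * exp (- (S t - \<beta>) * u)) = exp (- (S t - \<beta>) * y) / (S t - \<beta>)"
      using exp_tail(2)[OF Sk, of y] unfolding set_lebesgue_integral_def by simp
    also have "(t * sin (\<delta> * t) / S t) * (exp (- (S t - \<beta>) * y) / (S t - \<beta>)) =
        t * exp (- y * (S t - \<beta>)) / (S t * (S t - \<beta>)) * sin (\<delta> * t)"
      by (simp add: field_simps)
    finally show "(LINT u|lborel. \<Psi> u t) = t * exp (- y * (S t - \<beta>)) / (S t * (S t - \<beta>)) * sin (\<delta> * t)" .
  qed
  have "2 * pi * exp (- \<delta> * \<gamma>) * (LINT u:{y<..}|lborel. nig_density \<alpha> \<beta> 0 \<delta> u) =
      (LINT t|lborel. t * exp (- y * (S t - \<beta>)) / (S t * (S t - \<beta>)) * sin (\<delta> * t))"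
    using fub lhs rhs by simp
  then show ?thesis unfolding S_def \<gamma>_def[symmetric]
    by (simp add: exp_minus field_simps)
qed



lemma lint_fold:
  fixes h :: "real \<Rightarrow> real"
  assumes h: "integrable lborel h" and ev: "\<And>t. h (-t) = h t"
  shows "(LINT t|lborel. h t) = 2 * (LINT t:{0..}|lborel. h t)"
proof -
  have hm[measurable]: "h \<in> borel_measurable borel" using h by auto
  have i1: "integrable lborel (\<lambda>t. indicator {0..} t * h t)" using integrable_mult_indicator[of "{0..}" lborel h] h by simp
  have i2: "integrable lborel (\<lambda>t. indicator {..<0} t * h t)" using integrable_mult_indicator[of "{..<0}" lborel h] h by simp
  have "(LINT t|lborel. h t) = (LINT t|lborel. indicator {0..} t * h t + indicator {..<0} t * h t)"
    by (intro Bochner_Integration.integral_cong refl) (auto split: split_indicator)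
  also have "\<dots> = (LINT t|lborel. indicator {0..} t * h t) + (LINT t|lborel. indicator {..<0} t * h t)"
    using i1 i2 by (rule Bochner_Integration.integral_add)
  also have "(LINT t|lborel. indicator {..<0} t * h t) = \<bar>-1\<bar> *\<^sub>R (LINT t|lborel. indicator {..<0} (0 + (-1) * t) * h (0 + (-1) * t))"
    by (rule lborel_integral_real_affine) simp
  also have "\<dots> = (LINT t|lborel. indicator {0..} t * h t)"
    using AE_lborel_singleton[of 0]
    by (simp, intro integral_cong_AE) (auto simp: ev split: split_indicator elim!: eventually_mono)
  finally show ?thesis unfolding set_lebesgue_integral_def by simp
qed

theorem proposition2:
  fixes \<alpha> \<beta> \<mu> \<delta> x :: real
  assumes "\<alpha> > 0" and "\<bar>\<beta>\<bar> < \<alpha>" and "\<delta> > 0" and "x - \<mu> > 0"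
  shows "nig_cdf \<alpha> \<beta> \<mu> \<delta> x =
    1 - exp (\<delta> * sqrt (\<alpha>\<^sup>2 - \<beta>\<^sup>2)) / pi *
      (LINT t:{0..}|lborel.
         t * exp (- (x - \<mu>) * (sqrt (t\<^sup>2 + \<alpha>\<^sup>2) - \<beta>)) /
           (sqrt (t\<^sup>2 + \<alpha>\<^sup>2) * (sqrt (t\<^sup>2 + \<alpha>\<^sup>2) - \<beta>)) * sin (\<delta> * t))"
proof -
  note \<alpha> = assms(1) and \<beta> = assms(2) and \<delta> = assms(3)
  define y where "y = x - \<mu>"
  have y: "y > 0" using assms(4) unfolding y_def .
  define f0 where "f0 = nig_density \<alpha> \<beta> 0 \<delta>"
  have f0m[measurable]: "f0 \<in> borel_measurable borel" unfolding f0_def by measurable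
  have f0nn: "f0 u \<ge> 0" for u unfolding f0_def using \<alpha> \<delta> by (rule nig_density_nonneg)
  have tm: "(\<integral>\<^sup>+u. ennreal (f0 u) \<partial>lborel) = ennreal 1"
    unfolding f0_def using total_mass[OF \<alpha> \<beta> \<delta>] by simp
  have f0i: "integrable lborel f0" by (rule nn_to_lint(1)[OF f0m f0nn tm]) simp
  have f0I: "(LINT u|lborel. f0 u) = 1" by (rule nn_to_lint(2)[OF f0m f0nn tm]) simp
  have shift: "nig_density \<alpha> \<beta> \<mu> \<delta> t = f0 (t - \<mu>)" for t
    unfolding f0_def nig_density_0 by simp
  have "nig_cdf \<alpha> \<beta> \<mu> \<delta> x = (LINT t|lborel. indicator {..x} t * f0 (t - \<mu>))"
    unfolding nig_cdf_def set_lebesgue_integral_def shift by simp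
  also have "\<dots> = \<bar>1\<bar> *\<^sub>R (LINT u|lborel. indicator {..x} (\<mu> + 1 * u) * f0 (\<mu> + 1 * u - \<mu>))"
    by (rule lborel_integral_real_affine) simp
  also have "\<dots> = (LINT u|lborel. indicator {..y} u * f0 u)"
    by (auto simp: y_def intro!: Bochner_Integration.integral_cong split: split_indicator)
  also have "\<dots> = (LINT u|lborel. f0 u) - (LINT u|lborel. indicator {y<..} u * f0 u)"
  proof -
    have i1: "integrable lborel (\<lambda>u. indicator {..y} u * f0 u)" using integrable_mult_indicator[of "{..y}" lborel f0] f0i by simp
    have i2: "integrable lborel (\<lambda>u. indicator {y<..} u * f0 u)" using integrable_mult_indicator[of "{y<..}" lborel f0] f0i by simp
    have "(LINT u|lborel. f0 u) = (LINT u|lborel. indicator {..y} u * f0 u + indicator {y<..} u * f0 u)"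
      by (intro Bochner_Integration.integral_cong refl) (auto split: split_indicator)
    also have "\<dots> = (LINT u|lborel. indicator {..y} u * f0 u) + (LINT u|lborel. indicator {y<..} u * f0 u)"
      using i1 i2 by (rule Bochner_Integration.integral_add)
    finally show ?thesis by simp
  qed
  also have "(LINT u|lborel. indicator {y<..} u * f0 u) = (LINT u:{y<..}|lborel. nig_density \<alpha> \<beta> 0 \<delta> u)"
    unfolding set_lebesgue_integral_def f0_def by simp
  also have "\<dots> = exp (\<delta> * sqrt (\<alpha>\<^sup>2 - \<beta>\<^sup>2)) / (2*pi) *
      (LINT t|lborel. t * exp (- y * (sqrt (t\<^sup>2 + \<alpha>\<^sup>2) - \<beta>)) /
           (sqrt (t\<^sup>2 + \<alpha>\<^sup>2) * (sqrt (t\<^sup>2 + \<alpha>\<^sup>2) - \<beta>)) * sin (\<delta> * t))"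
    by (rule tail[OF \<alpha> \<beta> \<delta> y])
  also have "(LINT t|lborel. t * exp (- y * (sqrt (t\<^sup>2 + \<alpha>\<^sup>2) - \<beta>)) /
           (sqrt (t\<^sup>2 + \<alpha>\<^sup>2) * (sqrt (t\<^sup>2 + \<alpha>\<^sup>2) - \<beta>)) * sin (\<delta> * t)) =
      2 * (LINT t:{0..}|lborel. t * exp (- y * (sqrt (t\<^sup>2 + \<alpha>\<^sup>2) - \<beta>)) /
           (sqrt (t\<^sup>2 + \<alpha>\<^sup>2) * (sqrt (t\<^sup>2 + \<alpha>\<^sup>2) - \<beta>)) * sin (\<delta> * t))"
  proof (rule lint_fold)
    define S where "S t = sqrt (t\<^sup>2 + \<alpha>\<^sup>2)" for t
    define \<kappa> where "\<kappa> = \<alpha> - \<bar>\<beta>\<bar>"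
    have \<kappa>: "\<kappa> > 0" unfolding \<kappa>_def using \<beta> by simp
    have S: "S t > 0" for t unfolding S_def using \<alpha> by (simp add: add_nonneg_pos)
    have St: "\<bar>t\<bar> \<le> S t" for t unfolding S_def by (rule real_le_rsqrt) (use \<alpha> in simp)
    have Sa: "\<alpha> \<le> S t" for t unfolding S_def by (rule real_le_rsqrt) (use \<alpha> in simp)
    have Sb: "S t - \<beta> \<ge> \<kappa>" for t using Sa[of t] unfolding \<kappa>_def by (simp add: abs_if split: if_splits)
    show "integrable lborel (\<lambda>t. t * exp (- y * (sqrt (t\<^sup>2 + \<alpha>\<^sup>2) - \<beta>)) /
           (sqrt (t\<^sup>2 + \<alpha>\<^sup>2) * (sqrt (t\<^sup>2 + \<alpha>\<^sup>2) - \<beta>)) * sin (\<delta> * t))"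
    proof (rule Bochner_Integration.integrable_bound[OF integrable_mult_right[OF exp_abs_int[OF y], of "exp (y * \<bar>\<beta>\<bar>) / \<kappa>"]])
      show "AE t in lborel. norm (t * exp (- y * (sqrt (t\<^sup>2 + \<alpha>\<^sup>2) - \<beta>)) /
           (sqrt (t\<^sup>2 + \<alpha>\<^sup>2) * (sqrt (t\<^sup>2 + \<alpha>\<^sup>2) - \<beta>)) * sin (\<delta> * t)) \<le> norm (exp (y * \<bar>\<beta>\<bar>) / \<kappa> * exp (- y * \<bar>t\<bar>))"
      proof (intro always_eventually allI)
        fix t
        have Sk: "S t - \<beta> > 0" using Sb[of t] \<kappa> by linarith
        have 1: "\<bar>t\<bar> / S t \<le> 1" using St[of t] S[of t] by simp
        have 2: "1 / (S t - \<beta>) \<le> 1 / \<kappa>" using Sb[of t] \<kappa> by (intro divide_left_mono) auto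
        have 3: "exp (- y * (S t - \<beta>)) \<le> exp (y * \<bar>\<beta>\<bar>) * exp (- y * \<bar>t\<bar>)"
        proof -
          have "- y * (S t - \<beta>) \<le> y * \<bar>\<beta>\<bar> + (- y * \<bar>t\<bar>)"
          proof -
            have a1: "y * \<bar>t\<bar> \<le> y * S t" using St[of t] y by (intro mult_left_mono) auto
            have a2: "\<beta> * y \<le> y * \<bar>\<beta>\<bar>" using y by (simp add: mult.commute mult_left_mono)
            show ?thesis using a1 a2 by (simp add: algebra_simps)
          qed
          then show ?thesis by (simp add: exp_add[symmetric])
        qed
        have "norm (t * exp (- y * (S t - \<beta>)) / (S t * (S t - \<beta>)) * sin (\<delta> * t)) \<le>
            (\<bar>t\<bar> / S t) * (1 / (S t - \<beta>)) * exp (- y * (S t - \<beta>))"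
        proof -
          have "norm (t * exp (- y * (S t - \<beta>)) / (S t * (S t - \<beta>)) * sin (\<delta> * t)) =
              ((\<bar>t\<bar> / S t) * (1 / (S t - \<beta>)) * exp (- y * (S t - \<beta>))) * \<bar>sin (\<delta> * t)\<bar>"
            using S[of t] Sk by (simp add: abs_mult abs_of_pos)
          also have "\<dots> \<le> ((\<bar>t\<bar> / S t) * (1 / (S t - \<beta>)) * exp (- y * (S t - \<beta>))) * 1"
            using S[of t] Sk by (intro mult_left_mono abs_sin_le_one) auto
          finally show ?thesis by simp
        qed
        also have "\<dots> \<le> 1 * (1 / \<kappa>) * (exp (y * \<bar>\<beta>\<bar>) * exp (- y * \<bar>t\<bar>))"
          using 1 2 3 Sk S[of t] \<kappa> by (intro mult_mono) auto
        also have "\<dots> = norm (exp (y * \<bar>\<beta>\<bar>) / \<kappa> * exp (- y * \<bar>t\<bar>))" using \<kappa> by simp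
        finally show "norm (t * exp (- y * (sqrt (t\<^sup>2 + \<alpha>\<^sup>2) - \<beta>)) /
           (sqrt (t\<^sup>2 + \<alpha>\<^sup>2) * (sqrt (t\<^sup>2 + \<alpha>\<^sup>2) - \<beta>)) * sin (\<delta> * t)) \<le> norm (exp (y * \<bar>\<beta>\<bar>) / \<kappa> * exp (- y * \<bar>t\<bar>))"
          unfolding S_def .
      qed
    qed measurable
  qed simp
  finally show ?thesis unfolding f0I y_def by simp
qed


end
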